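(* Let $A=KQ/I$ be a finite-dimensional gentle algebra and let $\mathcal{D}$ be a finite multi-set consisting of strings and minimal bands for $A$, with total dimension vector $\mathbf{d}$. Then the family $\mathcal{O}_{\mathcal{D}}$ is an irreducible subset of the module variety $\mathrm{mod}(A,\mathbf{d})$.
   Context: Letters are arrows $\alpha\in Q_1$ (direct) and formal inverses $\alpha^{-1}$ (inverse). A string is a reduced walk $c_1\cdots c_m$ in $Q$ avoiding the relations of $I$ (and their inverses), including trivial strings $e_v$; a string is identified with its inverse. A band is a closed walk $b_1\cdots b_m$ ($m\ge1$) all of whose powers are strings, up to rotation and inversion; it is minimal if it is not of the form $(B')^r$ with $r\ge2$. $M(C)$ denotes the string module of a string $C$ (a copy of $K$ at each vertex position, arrows acting by identities along the letters), and $M(B,\lambda,q)$ ($\lambda\in K^*$, $q\ge1$) the band module (a copy of $K^q$ at each vertex position of the closed walk, arrows acting by identities along letters except one fixed letter acting by the Jordan block $J(\lambda,q)$). $\mathrm{mod}(A,\mathbf{d})$ is the affine variety of representations of $(Q,I)$ with dimension vector $\mathbf{d}$, with Zariski topology and the base change action of $\mathrm{GL}_{\mathbf{d}}$. For a multi-set $\mathcal{D}$ of strings $C_1,\dots,C_s$ and pairwise distinct bands $B_1^{\times q_1},\dots,B_t^{\times q_t}$ (band $B_j$ with multiplicity $q_j$), the family $\mathcal{O}_{\mathcal{D}}$ is the union of the $\mathrm{GL}_{\mathbf{d}}$-orbits of all modules $\bigoplus_i M(C_i)\oplus\bigoplus_j\bigoplus_k M(B_j,\lambda_{jk},q_{jk})$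 with $(q_{jk})_k$ a partition of $q_j$ and $\lambda_{jk}\in K^*$. Standing assumption: $K$ is an algebraically closed field. *)

theory Defs
  imports Main "HOL-Computational_Algebra.Polynomial"
begin

text \<open>A bound quiver (Q,I) with I generated by paths of length two.
  A pair (a,b) in rels means that the path "first a, then b" (i.e. b a, with
  tgt a = src b) lies in I.\<close>

record ('v,'a) bquiver =
  verts :: "'v set"
  arrs  :: "'a set"
  src   :: "'a \<Rightarrow> 'v"
  tgt   :: "'a \<Rightarrow> 'v"
  rels  :: "('a \<times> 'a) set"

definition is_path :: "('v,'a) bquiver \<Rightarrow> 'a list \<Rightarrow> bool" where
  "is_path Q p \<longleftrightarrow> set p \<subseteq> arrs Q \<and>
     (\<forall>i. Suc i < length p \<longrightarrow> tgt Q (p ! i) = src Q (p ! Suc i))"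

text \<open>For a monomial ideal, the non-trivial paths not in I (together with the
  trivial paths) form a basis of KQ/I; finite-dimensionality means there are
  finitely many of them.\<close>
definition fin_dim :: "('v,'a) bquiver \<Rightarrow> bool" where
  "fin_dim Q \<longleftrightarrow> finite {p. is_path Q p \<and>
      (\<forall>i. Suc i < length p \<longrightarrow> (p ! i, p ! Suc i) \<notin> rels Q)}"

definition gentle :: "('v,'a) bquiver \<Rightarrow> bool" where
  "gentle Q \<longleftrightarrow>
     finite (verts Q) \<and> finite (arrs Q) \<and>
     (\<forall>a\<in>arrs Q. src Q a \<in> verts Q \<and> tgt Q a \<in> verts Q) \<and>
     rels Q \<subseteq> {(a,b). a \<in> arrs Q \<and> b \<in> arrs Q \<and> tgt Q a = src Q b} \<and>
     (\<forall>v\<in>verts Q. card {a\<in>arrs Q. src Q a = v} \<le> 2 \<and> card {a\<in>arrs Q. tgt Q a = v} \<le> 2) \<and>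
     (\<forall>b\<in>arrs Q.
        card {a\<in>arrs Q. tgt Q a = src Q b \<and> (a,b) \<in> rels Q} \<le> 1 \<and>
        card {a\<in>arrs Q. tgt Q a = src Q b \<and> (a,b) \<notin> rels Q} \<le> 1) \<and>
     (\<forall>a\<in>arrs Q.
        card {c\<in>arrs Q. src Q c = tgt Q a \<and> (a,c) \<in> rels Q} \<le> 1 \<and>
        card {c\<in>arrs Q. src Q c = tgt Q a \<and> (a,c) \<notin> rels Q} \<le> 1)"

datatype 'a letter = Dir 'a | Inv 'a

fun larr :: "'a letter \<Rightarrow> 'a" where
  "larr (Dir a) = a" | "larr (Inv a) = a"

fun linv :: "'a letter \<Rightarrow> 'a letter" where
  "linv (Dir a) = Inv a" | "linv (Inv a) = Dir a"

fun lsrc :: "('v,'a) bquiver \<Rightarrow> 'a letter \<Rightarrow> 'v" where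
  "lsrc Q (Dir a) = src Q a" | "lsrc Q (Inv a) = tgt Q a"

fun ltgt :: "('v,'a) bquiver \<Rightarrow> 'a letter \<Rightarrow> 'v" where
  "ltgt Q (Dir a) = tgt Q a" | "ltgt Q (Inv a) = src Q a"

type_synonym ('v,'a) walk = "'v \<times> 'a letter list"

fun is_walk :: "('v,'a) bquiver \<Rightarrow> 'v \<Rightarrow> 'a letter list \<Rightarrow> bool" where
  "is_walk Q v [] = (v \<in> verts Q)"
| "is_walk Q v (l # ls) = (larr l \<in> arrs Q \<and> lsrc Q l = v \<and> is_walk Q (ltgt Q l) ls)"

text \<open>Consecutive letters l, l': reduced and avoiding the relations and their inverses.\<close>
fun ok_pair :: "('v,'a) bquiver \<Rightarrow> 'a letter \<Rightarrow> 'a letter \<Rightarrow> bool" where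
  "ok_pair Q (Dir a) (Inv b) = (a \<noteq> b)"
| "ok_pair Q (Inv a) (Dir b) = (a \<noteq> b)"
| "ok_pair Q (Dir a) (Dir b) = ((a,b) \<notin> rels Q)"
| "ok_pair Q (Inv a) (Inv b) = ((b,a) \<notin> rels Q)"

definition is_string :: "('v,'a) bquiver \<Rightarrow> ('v,'a) walk \<Rightarrow> bool" where
  "is_string Q C \<longleftrightarrow> is_walk Q (fst C) (snd C) \<and>
     (\<forall>i. Suc i < length (snd C) \<longrightarrow> ok_pair Q (snd C ! i) (snd C ! Suc i))"

definition is_band :: "('v,'a) bquiver \<Rightarrow> ('v,'a) walk \<Rightarrow> bool" where
  "is_band Q B \<longleftrightarrow> snd B \<noteq> [] \<and>
     (\<forall>n\<ge>1. is_string Q (fst B, concat (replicate n (snd B))))"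

definition minimal_band :: "('v,'a) walk \<Rightarrow> bool" where
  "minimal_band B \<longleftrightarrow> \<not> (\<exists>ls r. r \<ge> 2 \<and> snd B = concat (replicate r ls))"

definition wvert :: "('v,'a) bquiver \<Rightarrow> 'v \<Rightarrow> 'a letter list \<Rightarrow> nat \<Rightarrow> 'v" where
  "wvert Q v ls p = (if p = 0 then v else ltgt Q (ls ! (p - 1)))"

definition inv_walk :: "('v,'a) bquiver \<Rightarrow> ('v,'a) walk \<Rightarrow> ('v,'a) walk" where
  "inv_walk Q C = (wvert Q (fst C) (snd C) (length (snd C)), rev (map linv (snd C)))"

definition rot_walk :: "('v,'a) bquiver \<Rightarrow> nat \<Rightarrow> ('v,'a) walk \<Rightarrow> ('v,'a) walk" where
  "rot_walk Q k C = (wvert Q (fst C) (snd C) k, rotate k (snd C))"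

definition band_equiv :: "('v,'a) bquiver \<Rightarrow> ('v,'a) walk \<Rightarrow> ('v,'a) walk \<Rightarrow> bool" where
  "band_equiv Q B B' \<longleftrightarrow> (\<exists>k<length (snd B).
      B' = rot_walk Q k B \<or> B' = rot_walk Q k (inv_walk Q B))"

text \<open>A direct summand: a string module M(C), or a band module M(B,lambda,q).\<close>
datatype ('v,'a,'k) comp = StrC "('v,'a) walk" | BandC "('v,'a) walk" 'k nat

text \<open>Basis vectors of the direct sum of a list of summands: (summand index, position, copy).\<close>
definition basis :: "('v,'a,'k) comp list \<Rightarrow> (nat \<times> nat \<times> nat) set" where
  "basis cs = {(k,p,c). k < length cs \<and>
      (case cs ! k of StrC C \<Rightarrow> p \<le> length (snd C) \<and> c = 0
                    | BandC B lam q \<Rightarrow> p < length (snd B) \<and> c < q)}"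

definition bvert :: "('v,'a) bquiver \<Rightarrow> ('v,'a,'k) comp list \<Rightarrow> nat \<times> nat \<times> nat \<Rightarrow> 'v" where
  "bvert Q cs b = (case cs ! fst b of
      StrC C \<Rightarrow> wvert Q (fst C) (snd C) (fst (snd b))
    | BandC B lam q \<Rightarrow> wvert Q (fst B) (snd B) (fst (snd b)))"

definition jordan :: "'k::field \<Rightarrow> nat \<Rightarrow> nat \<Rightarrow> 'k" where
  "jordan lam c c' = (if c = c' then lam else if c' = Suc c then 1 else 0)"

text \<open>Coefficient of the output basis vector b in (arrow a applied to basis vector b').
  The letter with index 0 of a band carries the Jordan block.\<close>
definition coef :: "('v,'a,'k::field) comp list \<Rightarrow> 'a \<Rightarrow> nat \<times> nat \<times> nat \<Rightarrow> nat \<times> nat \<times> nat \<Rightarrow> 'k" where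
  "coef cs a b b' = (case (b, b') of ((k,p,c),(k',p',c')) \<Rightarrow>
     if k \<noteq> k' then 0 else
     (case cs ! k of
        StrC C \<Rightarrow> (\<Sum>i<length (snd C).
            if (snd C ! i = Dir a \<and> p' = i \<and> p = Suc i) \<or>
               (snd C ! i = Inv a \<and> p' = Suc i \<and> p = i) then 1 else 0)
      | BandC B lam q \<Rightarrow> (let m = length (snd B) in \<Sum>i<m.
            if (snd B ! i = Dir a \<and> p' = i \<and> p = Suc i mod m) \<or>
               (snd B ! i = Inv a \<and> p' = Suc i mod m \<and> p = i)
            then (if i = 0 then jordan lam c c' else (if c = c' then 1 else 0))
            else 0)))"

text \<open>A point: for each arrow a a d(tgt a) x d(src a) matrix, stored as a function
  with all entries outside the index ranges (and for non-arrows) equal to 0.\<close>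
type_synonym ('a,'k) point = "'a \<Rightarrow> nat \<Rightarrow> nat \<Rightarrow> 'k"

definition aff :: "('v,'a) bquiver \<Rightarrow> ('v \<Rightarrow> nat) \<Rightarrow> ('a,'k::zero) point set" where
  "aff Q d = {x. \<forall>a i j. \<not> (a \<in> arrs Q \<and> i < d (tgt Q a) \<and> j < d (src Q a)) \<longrightarrow> x a i j = 0}"

definition modvar :: "('v,'a) bquiver \<Rightarrow> ('v \<Rightarrow> nat) \<Rightarrow> ('a,'k::comm_ring_1) point set" where
  "modvar Q d = {x \<in> aff Q d. \<forall>(a,b)\<in>rels Q. \<forall>i j.
      (\<Sum>l<d (tgt Q a). x b i l * x a l j) = 0}"

inductive_set polyfun :: "(('a,'k::comm_ring_1) point \<Rightarrow> 'k) set" where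
  pconst: "(\<lambda>x. c) \<in> polyfun"
| pcoord: "(\<lambda>x. x a i j) \<in> polyfun"
| padd: "f \<in> polyfun \<Longrightarrow> g \<in> polyfun \<Longrightarrow> (\<lambda>x. f x + g x) \<in> polyfun"
| pmult: "f \<in> polyfun \<Longrightarrow> g \<in> polyfun \<Longrightarrow> (\<lambda>x. f x * g x) \<in> polyfun"

definition zclosed :: "('v,'a) bquiver \<Rightarrow> ('v \<Rightarrow> nat) \<Rightarrow> ('a,'k::comm_ring_1) point set \<Rightarrow> bool" where
  "zclosed Q d Z \<longleftrightarrow> (\<exists>S \<subseteq> polyfun. Z = {x \<in> aff Q d. \<forall>f\<in>S. f x = 0})"

text \<open>Irreducible subset (w.r.t. the Zariski topology, hence w.r.t. the induced
  topology on any closed subvariety containing it).\<close>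
definition zirreducible :: "('v,'a) bquiver \<Rightarrow> ('v \<Rightarrow> nat) \<Rightarrow> ('a,'k::comm_ring_1) point set \<Rightarrow> bool" where
  "zirreducible Q d X \<longleftrightarrow> X \<noteq> {} \<and>
     (\<forall>Z1 Z2. zclosed Q d Z1 \<and> zclosed Q d Z2 \<and> X \<subseteq> Z1 \<union> Z2 \<longrightarrow> X \<subseteq> Z1 \<or> X \<subseteq> Z2)"

definition inverse_mats :: "nat \<Rightarrow> (nat \<Rightarrow> nat \<Rightarrow> 'k::comm_ring_1) \<Rightarrow> (nat \<Rightarrow> nat \<Rightarrow> 'k) \<Rightarrow> bool" where
  "inverse_mats n g h \<longleftrightarrow> (\<forall>i<n. \<forall>j<n.
      (\<Sum>l<n. g i l * h l j) = (if i = j then 1 else 0) \<and>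
      (\<Sum>l<n. h i l * g l j) = (if i = j then 1 else 0))"

text \<open>(g . y)_a = g_{tgt a} y_a g_{src a}^{-1}, where h is the inverse of g.\<close>
definition gl_act :: "('v,'a) bquiver \<Rightarrow> ('v \<Rightarrow> nat) \<Rightarrow> ('v \<Rightarrow> nat \<Rightarrow> nat \<Rightarrow> 'k::comm_ring_1)
     \<Rightarrow> ('v \<Rightarrow> nat \<Rightarrow> nat \<Rightarrow> 'k) \<Rightarrow> ('a,'k) point \<Rightarrow> ('a,'k) point" where
  "gl_act Q d g h y = (\<lambda>a i j. if a \<in> arrs Q \<and> i < d (tgt Q a) \<and> j < d (src Q a)
      then (\<Sum>l<d (tgt Q a). \<Sum>l'<d (src Q a). g (tgt Q a) i l * y a l l' * h (src Q a) l' j)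
      else 0)"

definition gl_orbit :: "('v,'a) bquiver \<Rightarrow> ('v \<Rightarrow> nat) \<Rightarrow> ('a,'k::comm_ring_1) point \<Rightarrow> ('a,'k) point set" where
  "gl_orbit Q d y = {gl_act Q d g h y | g h. \<forall>v\<in>verts Q. inverse_mats (d v) (g v) (h v)}"

text \<open>The point of the direct sum of the summands cs, using the enumeration e v of the
  basis vectors lying at vertex v.\<close>
definition rep_point :: "('v,'a) bquiver \<Rightarrow> ('v \<Rightarrow> nat) \<Rightarrow> ('v,'a,'k::field) comp list
     \<Rightarrow> ('v \<Rightarrow> nat \<Rightarrow> nat \<times> nat \<times> nat) \<Rightarrow> ('a,'k) point" where
  "rep_point Q d cs e = (\<lambda>a i j. if a \<in> arrs Q \<and> i < d (tgt Q a) \<and> j < d (src Q a)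
      then coef cs a (e (tgt Q a) i) (e (src Q a) j) else 0)"

text \<open>Total dimension vector of D = strings Cs and bands Bs with multiplicities qs.\<close>
definition dimD :: "('v,'a) bquiver \<Rightarrow> ('v,'a) walk list \<Rightarrow> ('v,'a) walk list \<Rightarrow> nat list \<Rightarrow> 'v \<Rightarrow> nat" where
  "dimD Q Cs Bs qs v =
     (\<Sum>C\<leftarrow>Cs. card {p. p \<le> length (snd C) \<and> wvert Q (fst C) (snd C) p = v}) +
     (\<Sum>j<length Bs. qs ! j * card {p. p < length (snd (Bs ! j)) \<and> wvert Q (fst (Bs ! j)) (snd (Bs ! j)) p = v})"

text \<open>The summand list for strings Cs and, for each band B_j, a list parts_j of pairs
  (lambda_jk, q_jk).\<close>
definition comps :: "('v,'a) walk list \<Rightarrow> ('v,'a) walk list \<Rightarrow> ('k \<times> nat) list list \<Rightarrow> ('v,'a,'k) comp list" where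
  "comps Cs Bs parts = map StrC Cs @
     concat (map (\<lambda>j. map (\<lambda>(lam,q). BandC (Bs ! j) lam q) (parts ! j)) [0..<length Bs])"

definition famO :: "('v,'a) bquiver \<Rightarrow> ('v,'a) walk list \<Rightarrow> ('v,'a) walk list \<Rightarrow> nat list
     \<Rightarrow> ('a,'k::field) point set" where
  "famO Q Cs Bs qs = (let d = dimD Q Cs Bs qs in
     \<Union> {gl_orbit Q d (rep_point Q d (comps Cs Bs parts) e) | parts e.
         length parts = length Bs \<and>
         (\<forall>j<length Bs. (\<forall>(lam,q)\<in>set (parts ! j). lam \<noteq> 0 \<and> q \<ge> 1) \<and>
                        sum_list (map snd (parts ! j)) = qs ! j) \<and>
         (\<forall>v\<in>verts Q. bij_betw (e v) {..<d v}
              {b \<in> basis (comps Cs Bs parts). bvert Q (comps Cs Bs parts) b = v})})"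

definition alg_closed :: "'k::field itself \<Rightarrow> bool" where
  "alg_closed _ \<longleftrightarrow> (\<forall>p::'k poly. degree p > 0 \<longrightarrow> (\<exists>z. poly p z = 0))"

end

theory Submission
  imports Defs "Jordan_Normal_Form.Jordan_Normal_Form_Existence"
begin

definition offs :: "nat list \<Rightarrow> nat \<Rightarrow> nat" where
  "offs ls r = sum_list (take r ls)"

fun dec :: "nat list \<Rightarrow> nat \<Rightarrow> nat \<times> nat" where
  "dec [] c = (0, c)"
| "dec (l # ls) c = (if c < l then (0, c) else (case dec ls (c - l) of (r, c0) \<Rightarrow> (Suc r, c0)))"

lemma offs_Cons0[simp]: "offs (l # ls) 0 = 0" by (simp add: offs_def)
lemma offs_Cons_Suc[simp]: "offs (l # ls) (Suc r) = l + offs ls r" by (simp add: offs_def)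

lemma dec_offs: "r < length ls \<Longrightarrow> c0 < ls ! r \<Longrightarrow> dec ls (offs ls r + c0) = (r, c0)"
proof (induction ls arbitrary: r)
  case Nil then show ?case by simp
next
  case (Cons l ls)
  show ?case
  proof (cases r)
    case 0 then show ?thesis using Cons by simp
  next
    case (Suc r') then show ?thesis using Cons by simp
  qed
qed

lemma dec_props: "c < sum_list ls \<Longrightarrow>
   fst (dec ls c) < length ls \<and> snd (dec ls c) < ls ! fst (dec ls c) \<and> offs ls (fst (dec ls c)) + snd (dec ls c) = c"
proof (induction ls arbitrary: c)
  case Nil then show ?case by simp
next
  case (Cons l ls)
  show ?case
  proof (cases "c < l")
    case True then show ?thesis by simp
  next
    case False
    then have "c - l < sum_list ls" using Cons.prems by simp
    from Cons.IH[OF this] False show ?thesis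
      by (auto split: prod.splits)
  qed
qed

lemma offs_bound: "r < length ls \<Longrightarrow> c0 < ls ! r \<Longrightarrow> offs ls r + c0 < sum_list ls"
proof (induction ls arbitrary: r)
  case Nil then show ?case by simp
next
  case (Cons l ls) then show ?case by (cases r) auto
qed

lemma offs_inj: "r < length ls \<Longrightarrow> c0 < ls ! r \<Longrightarrow> r' < length ls \<Longrightarrow> c0' < ls ! r' \<Longrightarrow>
   offs ls r + c0 = offs ls r' + c0' \<longleftrightarrow> r = r' \<and> c0 = c0'"
  by (metis dec_offs prod.inject)

lemma length_concat_offs: "length (concat xss) = sum_list (map length xss)"
  by (simp add: length_concat)

lemma nth_concat_offs: "r < length xss \<Longrightarrow> c0 < length (xss ! r) \<Longrightarrow>
   concat xss ! (offs (map length xss) r + c0) = xss ! r ! c0"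
proof (induction xss arbitrary: r)
  case Nil then show ?case by simp
next
  case (Cons xs xss)
  show ?case
  proof (cases r)
    case 0 then show ?thesis using Cons by (simp add: nth_append)
  next
    case (Suc r')
    then have "offs (map length xss) r' + c0 < length (concat xss)"
      using Cons.prems offs_bound[of r' "map length xss" c0] by (simp add: length_concat)
    then show ?thesis using Cons Suc by (simp add: nth_append)
  qed
qed

section \<open>Polynomial functions of one variable and the ring with denominators\<close>

definition PF :: "('k::field \<Rightarrow> 'k) set" where
  "PF = {F. \<exists>p. \<forall>t. F t = poly p t}"

lemma PF_const[simp, intro]: "(\<lambda>t. c) \<in> PF"
  unfolding PF_def by (intro CollectI exI[of _ "[:c:]"]) simp

lemma PF_id[simp, intro]: "(\<lambda>t. t) \<in> PF"
  unfolding PF_def by (intro CollectI exI[of _ "[:0,1:]"]) simp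

lemma PF_add[intro]: "F \<in> PF \<Longrightarrow> G \<in> PF \<Longrightarrow> (\<lambda>t. F t + G t) \<in> PF"
  unfolding PF_def by (auto, metis poly_add)

lemma PF_mult[intro]: "F \<in> PF \<Longrightarrow> G \<in> PF \<Longrightarrow> (\<lambda>t. F t * G t) \<in> PF"
  unfolding PF_def by (auto, metis poly_mult)

lemma PF_minus[intro]: "F \<in> PF \<Longrightarrow> G \<in> PF \<Longrightarrow> (\<lambda>t. F t - G t) \<in> PF"
  unfolding PF_def by (auto, metis poly_diff)

lemma PF_sum[intro]: "(\<And>i. i \<in> A \<Longrightarrow> (\<lambda>t. f i t) \<in> PF) \<Longrightarrow> (\<lambda>t. \<Sum>i\<in>A. f i t) \<in> PF"
proof (induction A rule: infinite_finite_induct)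
  case (infinite A) then show ?case by simp
next
  case empty then show ?case by simp
next
  case (insert x F) then show ?case by (simp add: PF_add)
qed

lemma PF_prod[intro]: "(\<And>i. i \<in> A \<Longrightarrow> (\<lambda>t. f i t) \<in> PF) \<Longrightarrow> (\<lambda>t. \<Prod>i\<in>A. f i t) \<in> PF"
proof (induction A rule: infinite_finite_induct)
  case (infinite A) then show ?case by simp
next
  case empty then show ?case by simp
next
  case (insert x F) then show ?case by (simp add: PF_mult)
qed

lemma PF_if[intro]: "F \<in> PF \<Longrightarrow> G \<in> PF \<Longrightarrow> (\<lambda>t. if P then F t else G t) \<in> PF"
  by (cases P) auto

lemma PF_det:
  assumes "\<And>t. A t \<in> carrier_mat n n"
    and "\<And>i j. i < n \<Longrightarrow> j < n \<Longrightarrow> (\<lambda>t. A t $$ (i,j)) \<in> PF"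
  shows "(\<lambda>t. det (A t)) \<in> PF"
proof -
  have "(\<lambda>t. \<Sum> p \<in> {p. p permutes {0 ..< n}}. signof p * (\<Prod> i = 0 ..< n. A t $$ (i, p i))) \<in> PF"
  proof (intro PF_sum PF_mult PF_const PF_prod)
    fix p i assume "p \<in> {p. p permutes {0 ..< n}}" "i \<in> {0..<n}"
    then have "p i < n" by (auto simp: permutes_in_image)
    then show "(\<lambda>t. A t $$ (i, p i)) \<in> PF" using assms(2) \<open>i \<in> {0..<n}\<close> by auto
  qed
  then show ?thesis using det_def'[OF assms(1)] by simp
qed

definition RQ :: "'k::field poly \<Rightarrow> ('k \<Rightarrow> 'k) set" where
  "RQ q = {F. \<exists>p n. \<forall>t. poly q t \<noteq> 0 \<longrightarrow> F t * poly q t ^ n = poly p t}"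

lemma PF_RQ: "F \<in> PF \<Longrightarrow> F \<in> RQ q"
  unfolding PF_def RQ_def by (auto, metis mult.right_neutral power_0)

lemma RQ_add: "F \<in> RQ q \<Longrightarrow> G \<in> RQ q \<Longrightarrow> (\<lambda>t. F t + G t) \<in> RQ q"
proof -
  assume "F \<in> RQ q" "G \<in> RQ q"
  then obtain p n p' n' where F: "\<forall>t. poly q t \<noteq> 0 \<longrightarrow> F t * poly q t ^ n = poly p t"
    and G: "\<forall>t. poly q t \<noteq> 0 \<longrightarrow> G t * poly q t ^ n' = poly p' t" unfolding RQ_def by auto
  show ?thesis unfolding RQ_def
  proof (intro CollectI exI allI impI)
    fix t assume "poly q t \<noteq> 0"
    have "(F t + G t) * poly q t ^ (n + n') = (F t * poly q t ^ n) * poly q t ^ n' + (G t * poly q t ^ n') * poly q t ^ n"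
      by (simp add: algebra_simps power_add)
    also have "\<dots> = poly (p * q ^ n' + p' * q ^ n) t" using F G \<open>poly q t \<noteq> 0\<close> by (simp add: poly_power)
    finally show "(F t + G t) * poly q t ^ (n + n') = poly (p * q ^ n' + p' * q ^ n) t" .
  qed
qed

lemma RQ_mult: "F \<in> RQ q \<Longrightarrow> G \<in> RQ q \<Longrightarrow> (\<lambda>t. F t * G t) \<in> RQ q"
proof -
  assume "F \<in> RQ q" "G \<in> RQ q"
  then obtain p n p' n' where F: "\<forall>t. poly q t \<noteq> 0 \<longrightarrow> F t * poly q t ^ n = poly p t"
    and G: "\<forall>t. poly q t \<noteq> 0 \<longrightarrow> G t * poly q t ^ n' = poly p' t" unfolding RQ_def by auto
  show ?thesis unfolding RQ_def
  proof (intro CollectI exI allI impI)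
    fix t assume "poly q t \<noteq> 0"
    have "(F t * G t) * poly q t ^ (n + n') = (F t * poly q t ^ n) * (G t * poly q t ^ n')"
      by (simp add: algebra_simps power_add)
    also have "\<dots> = poly (p * p') t" using F G \<open>poly q t \<noteq> 0\<close> by simp
    finally show "(F t * G t) * poly q t ^ (n + n') = poly (p * p') t" .
  qed
qed

lemma RQ_sum: "(\<And>i. i \<in> A \<Longrightarrow> (\<lambda>t. f i t) \<in> RQ q) \<Longrightarrow> (\<lambda>t. \<Sum>i\<in>A. f i t) \<in> RQ q"
proof (induction A rule: infinite_finite_induct)
  case (infinite A) then show ?case by (simp add: PF_RQ)
next
  case empty then show ?case by (simp add: PF_RQ)
next
  case (insert x F) then show ?case by (simp add: RQ_add)
qed

lemma RQ_if: "F \<in> RQ q \<Longrightarrow> G \<in> RQ q \<Longrightarrow> (\<lambda>t. if P then F t else G t) \<in> RQ q"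
  by (cases P) auto

lemma RQ_inv:
  assumes "\<And>t. poly q t = D t * E t" "D \<in> PF" "E \<in> PF"
  shows "(\<lambda>t. inverse (D t)) \<in> RQ q"
proof -
  obtain p where p: "\<forall>t. E t = poly p t" using assms(3) unfolding PF_def by auto
  show ?thesis unfolding RQ_def
  proof (intro CollectI exI allI impI)
    fix t assume "poly q t \<noteq> 0"
    then have "D t \<noteq> 0" using assms(1) by auto
    then show "inverse (D t) * poly q t ^ 1 = poly p t" using assms(1) p by simp
  qed
qed

definition repc :: "('v,'a) bquiver \<Rightarrow> ('v\<Rightarrow>nat) \<Rightarrow> ('a \<Rightarrow> 'b \<Rightarrow> 'b \<Rightarrow> 'k::comm_ring_1) \<Rightarrow> ('v \<Rightarrow> nat \<Rightarrow> 'b) \<Rightarrow> ('a,'k) point" where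
 "repc Q d c e = (\<lambda>a i j. if a \<in> arrs Q \<and> i < d (tgt Q a) \<and> j < d (src Q a) then c a (e (tgt Q a) i) (e (src Q a) j) else 0)"

lemma rep_point_repc: "rep_point Q d cs e = repc Q d (coef cs) e"
  by (simp add: rep_point_def repc_def)

lemma base_change:
  fixes Bv :: "'v \<Rightarrow> 'b set" and S T :: "'b \<Rightarrow> 'b \<Rightarrow> 'k::comm_ring_1"
  assumes ends: "\<forall>a\<in>arrs Q. src Q a \<in> verts Q \<and> tgt Q a \<in> verts Q"
    and e1: "\<forall>v\<in>verts Q. bij_betw (e1 v) {..<d v} (Bv v)"
    and e2: "\<forall>v\<in>verts Q. bij_betw (e2 v) {..<d v} (Bv v)"
    and ST: "\<forall>v\<in>verts Q. \<forall>b\<in>Bv v. \<forall>b'\<in>Bv v. (\<Sum>x\<in>Bv v. S b x * T x b') = (if b = b' then 1 else 0)"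
    and TS: "\<forall>v\<in>verts Q. \<forall>b\<in>Bv v. \<forall>b'\<in>Bv v. (\<Sum>x\<in>Bv v. T b x * S x b') = (if b = b' then 1 else 0)"
    and c: "\<forall>a\<in>arrs Q. \<forall>b\<in>Bv (tgt Q a). \<forall>b'\<in>Bv (src Q a).
              c2 a b b' = (\<Sum>x\<in>Bv (tgt Q a). \<Sum>x'\<in>Bv (src Q a). S b x * c1 a x x' * T x' b')"
  shows "repc Q d c2 e2 = gl_act Q d (\<lambda>v i l. S (e2 v i) (e1 v l)) (\<lambda>v l j. T (e1 v l) (e2 v j)) (repc Q d c1 e1)"
    and "\<forall>v\<in>verts Q. inverse_mats (d v) (\<lambda>i l. S (e2 v i) (e1 v l)) (\<lambda>l j. T (e1 v l) (e2 v j))"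
proof -
  show "repc Q d c2 e2 = gl_act Q d (\<lambda>v i l. S (e2 v i) (e1 v l)) (\<lambda>v l j. T (e1 v l) (e2 v j)) (repc Q d c1 e1)"
  proof (intro ext)
    fix a i j
    show "repc Q d c2 e2 a i j = gl_act Q d (\<lambda>v i l. S (e2 v i) (e1 v l)) (\<lambda>v l j. T (e1 v l) (e2 v j)) (repc Q d c1 e1) a i j"
    proof (cases "a \<in> arrs Q \<and> i < d (tgt Q a) \<and> j < d (src Q a)")
      case False then show ?thesis by (auto simp add: repc_def gl_act_def)
    next
      case True
      let ?t = "tgt Q a" and ?s = "src Q a"
      have vt: "?t \<in> verts Q" and vs: "?s \<in> verts Q" using ends True by auto
      have bt: "bij_betw (e1 ?t) {..<d ?t} (Bv ?t)" and bs: "bij_betw (e1 ?s) {..<d ?s} (Bv ?s)"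
        using e1 vt vs by auto
      have it: "e2 ?t i \<in> Bv ?t" and js: "e2 ?s j \<in> Bv ?s"
        using e2 vt vs True by (auto dest: bij_betwE)
      have "gl_act Q d (\<lambda>v i l. S (e2 v i) (e1 v l)) (\<lambda>v l j. T (e1 v l) (e2 v j)) (repc Q d c1 e1) a i j
          = (\<Sum>l<d ?t. \<Sum>l'<d ?s. S (e2 ?t i) (e1 ?t l) * c1 a (e1 ?t l) (e1 ?s l') * T (e1 ?s l') (e2 ?s j))"
        using True by (simp add: gl_act_def repc_def)
      also have "\<dots> = (\<Sum>x\<in>Bv ?t. \<Sum>l'<d ?s. S (e2 ?t i) x * c1 a x (e1 ?s l') * T (e1 ?s l') (e2 ?s j))"
        by (rule sum.reindex_bij_betw[OF bt, where g = "\<lambda>x. \<Sum>l'<d ?s. S (e2 ?t i) x * c1 a x (e1 ?s l') * T (e1 ?s l') (e2 ?s j)"])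
      also have "\<dots> = (\<Sum>x\<in>Bv ?t. \<Sum>x'\<in>Bv ?s. S (e2 ?t i) x * c1 a x x' * T x' (e2 ?s j))"
        by (rule sum.cong[OF refl], rule sum.reindex_bij_betw[OF bs])
      also have "\<dots> = c2 a (e2 ?t i) (e2 ?s j)" using c True it js by auto
      finally show ?thesis using True by (simp add: repc_def)
    qed
  qed
  show "\<forall>v\<in>verts Q. inverse_mats (d v) (\<lambda>i l. S (e2 v i) (e1 v l)) (\<lambda>l j. T (e1 v l) (e2 v j))"
  proof (intro ballI)
    fix v assume v: "v \<in> verts Q"
    have b1: "bij_betw (e1 v) {..<d v} (Bv v)" and b2: "bij_betw (e2 v) {..<d v} (Bv v)" using e1 e2 v by auto
    show "inverse_mats (d v) (\<lambda>i l. S (e2 v i) (e1 v l)) (\<lambda>l j. T (e1 v l) (e2 v j))"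
      unfolding inverse_mats_def
    proof (intro allI impI conjI)
      fix i j assume i: "i < d v" and j: "j < d v"
      have ii: "e2 v i \<in> Bv v" "e2 v j \<in> Bv v" using b2 i j by (auto dest: bij_betwE)
      have inj: "(e2 v i = e2 v j) = (i = j)" using b2 i j unfolding bij_betw_def inj_on_def by auto
      have "(\<Sum>l<d v. S (e2 v i) (e1 v l) * T (e1 v l) (e2 v j)) = (\<Sum>x\<in>Bv v. S (e2 v i) x * T x (e2 v j))"
        by (rule sum.reindex_bij_betw[OF b1])
      then show "(\<Sum>l<d v. S (e2 v i) (e1 v l) * T (e1 v l) (e2 v j)) = (if i = j then 1 else 0)"
        using ST v ii inj by simp
    next
      fix i j assume i: "i < d v" and j: "j < d v"
      have ii: "e1 v i \<in> Bv v" "e1 v j \<in> Bv v" using b1 i j by (auto dest: bij_betwE)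
      have inj: "(e1 v i = e1 v j) = (i = j)" using b1 i j unfolding bij_betw_def inj_on_def by auto
      have "(\<Sum>l<d v. T (e1 v i) (e2 v l) * S (e2 v l) (e1 v j)) = (\<Sum>x\<in>Bv v. T (e1 v i) x * S x (e1 v j))"
        by (rule sum.reindex_bij_betw[OF b2])
      then show "(\<Sum>l<d v. T (e1 v i) (e2 v l) * S (e2 v l) (e1 v j)) = (if i = j then 1 else 0)"
        using TS v ii inj by simp
    qed
  qed
qed

definition mm :: "nat \<Rightarrow> (nat \<Rightarrow> nat \<Rightarrow> 'k::comm_ring_1) \<Rightarrow> (nat \<Rightarrow> nat \<Rightarrow> 'k) \<Rightarrow> nat \<Rightarrow> nat \<Rightarrow> 'k" where
  "mm n g h = (\<lambda>i j. \<Sum>l<n. g i l * h l j)"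

lemma gl_act_comp:
  "gl_act Q d g h (gl_act Q d g' h' y) = gl_act Q d (\<lambda>v. mm (d v) (g v) (g' v)) (\<lambda>v. mm (d v) (h' v) (h v)) y"
proof (intro ext)
  fix a i j
  show "gl_act Q d g h (gl_act Q d g' h' y) a i j = gl_act Q d (\<lambda>v. mm (d v) (g v) (g' v)) (\<lambda>v. mm (d v) (h' v) (h v)) y a i j"
  proof (cases "a \<in> arrs Q \<and> i < d (tgt Q a) \<and> j < d (src Q a)")
    case False then show ?thesis by (auto simp add: gl_act_def)
  next
    case True
    let ?t = "tgt Q a" and ?s = "src Q a"
    have "gl_act Q d g h (gl_act Q d g' h' y) a i j =
      (\<Sum>l<d ?t. \<Sum>l'<d ?s. g ?t i l * (\<Sum>m<d ?t. \<Sum>m'<d ?s. g' ?t l m * y a m m' * h' ?s m' l') * h ?s l' j)"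
      using True by (simp add: gl_act_def)
    also have "\<dots> = (\<Sum>l<d ?t. \<Sum>l'<d ?s. \<Sum>m<d ?t. \<Sum>m'<d ?s. g ?t i l * g' ?t l m * y a m m' * h' ?s m' l' * h ?s l' j)"
      by (simp add: sum_distrib_left sum_distrib_right mult.assoc)
    also have "\<dots> = (\<Sum>l<d ?t. \<Sum>m<d ?t. \<Sum>l'<d ?s. \<Sum>m'<d ?s. g ?t i l * g' ?t l m * y a m m' * h' ?s m' l' * h ?s l' j)"
      by (rule sum.cong[OF refl], rule sum.swap)
    also have "\<dots> = (\<Sum>m<d ?t. \<Sum>l<d ?t. \<Sum>l'<d ?s. \<Sum>m'<d ?s. g ?t i l * g' ?t l m * y a m m' * h' ?s m' l' * h ?s l' j)"
      by (rule sum.swap)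
    also have "\<dots> = (\<Sum>m<d ?t. \<Sum>l<d ?t. \<Sum>m'<d ?s. \<Sum>l'<d ?s. g ?t i l * g' ?t l m * y a m m' * h' ?s m' l' * h ?s l' j)"
      by (rule sum.cong[OF refl], rule sum.cong[OF refl], rule sum.swap)
    also have "\<dots> = (\<Sum>m<d ?t. \<Sum>m'<d ?s. \<Sum>l<d ?t. \<Sum>l'<d ?s. g ?t i l * g' ?t l m * y a m m' * h' ?s m' l' * h ?s l' j)"
      by (rule sum.cong[OF refl], rule sum.swap)
    also have "\<dots> = (\<Sum>m<d ?t. \<Sum>m'<d ?s. \<Sum>l'<d ?s. \<Sum>l<d ?t. g ?t i l * g' ?t l m * y a m m' * h' ?s m' l' * h ?s l' j)"
      by (rule sum.cong[OF refl], rule sum.cong[OF refl], rule sum.swap)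
    also have "\<dots> = (\<Sum>m<d ?t. \<Sum>m'<d ?s. mm (d ?t) (g ?t) (g' ?t) i m * y a m m' * mm (d ?s) (h' ?s) (h ?s) m' j)"
      by (simp add: mm_def sum_distrib_left sum_distrib_right mult.assoc mult.left_commute)
    finally show ?thesis using True by (simp add: gl_act_def)
  qed
qed


definition Mt :: "nat \<Rightarrow> (nat \<Rightarrow> nat \<Rightarrow> 'k::comm_ring_1) \<Rightarrow> 'k mat" where
  "Mt n f = mat n n (\<lambda>(i,j). f i j)"

lemma Mt_dims[simp]: "dim_row (Mt n f) = n" "dim_col (Mt n f) = n" by (auto simp: Mt_def)

lemma Mt_carrier[simp]: "Mt n f \<in> carrier_mat n n" by (simp add: Mt_def)

lemma Mt_index[simp]: "i < n \<Longrightarrow> j < n \<Longrightarrow> Mt n f $$ (i,j) = f i j" by (simp add: Mt_def)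

lemma Mt_mult: "Mt n f * Mt n g = Mt n (mm n f g)"
  by (rule eq_matI) (auto simp: Mt_def mm_def scalar_prod_def lessThan_atLeast0 intro!: sum.cong)

lemma Mt_eq_one: "Mt n f = 1\<^sub>m n \<longleftrightarrow> (\<forall>i<n. \<forall>j<n. f i j = (if i = j then 1 else 0))"
proof
  assume "Mt n f = 1\<^sub>m n"
  then show "\<forall>i<n. \<forall>j<n. f i j = (if i = j then 1 else 0)"
    by (metis Mt_index index_one_mat(1))
next
  assume "\<forall>i<n. \<forall>j<n. f i j = (if i = j then 1 else 0)"
  then show "Mt n f = 1\<^sub>m n" by (intro eq_matI) (auto simp: Mt_def)
qed

lemma inverse_mats_iff: "inverse_mats n g h \<longleftrightarrow> Mt n g * Mt n h = 1\<^sub>m n \<and> Mt n h * Mt n g = 1\<^sub>m n"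
  unfolding Mt_mult Mt_eq_one inverse_mats_def mm_def by blast

lemma Mt_cong: "(\<forall>i<n. \<forall>j<n. f i j = g i j) \<Longrightarrow> Mt n f = Mt n g"
  by (intro eq_matI) (auto simp: Mt_def)

lemma inverse_mats_comp:
  assumes "inverse_mats n g h" "inverse_mats n g' h'"
  shows "inverse_mats n (mm n g g') (mm n h' h)"
proof -
  have c: "Mt n g \<in> carrier_mat n n" "Mt n h \<in> carrier_mat n n" "Mt n g' \<in> carrier_mat n n" "Mt n h' \<in> carrier_mat n n"
    by auto
  from assms have 1: "Mt n g * Mt n h = 1\<^sub>m n" "Mt n h * Mt n g = 1\<^sub>m n"
    "Mt n g' * Mt n h' = 1\<^sub>m n" "Mt n h' * Mt n g' = 1\<^sub>m n" by (auto simp: inverse_mats_iff)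
  have "Mt n g * Mt n g' * (Mt n h' * Mt n h) = Mt n g * (Mt n g' * (Mt n h' * Mt n h))"
    by (rule assoc_mult_mat) auto
  also have "\<dots> = Mt n g * ((Mt n g' * Mt n h') * Mt n h)"
    by (subst assoc_mult_mat[of _ n n]) auto
  also have "\<dots> = 1\<^sub>m n" using 1 by simp
  finally have A: "Mt n g * Mt n g' * (Mt n h' * Mt n h) = 1\<^sub>m n" .
  have "Mt n h' * Mt n h * (Mt n g * Mt n g') = Mt n h' * (Mt n h * (Mt n g * Mt n g'))"
    by (rule assoc_mult_mat) auto
  also have "\<dots> = Mt n h' * ((Mt n h * Mt n g) * Mt n g')"
    by (subst assoc_mult_mat[of _ n n]) auto
  also have "\<dots> = 1\<^sub>m n" using 1 by simp
  finally have B: "Mt n h' * Mt n h * (Mt n g * Mt n g') = 1\<^sub>m n" .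
  show ?thesis using A B by (simp add: inverse_mats_iff Mt_mult)
qed

lemma inverse_mats_unique:
  assumes "inverse_mats n g h" "inverse_mats n g h'" "i < n" "j < n"
  shows "h i j = h' i j"
proof -
  have c: "Mt n g \<in> carrier_mat n n" "Mt n h \<in> carrier_mat n n" "Mt n h' \<in> carrier_mat n n" by auto
  from assms have 1: "Mt n g * Mt n h = 1\<^sub>m n" "Mt n h * Mt n g = 1\<^sub>m n"
    "Mt n g * Mt n h' = 1\<^sub>m n" "Mt n h' * Mt n g = 1\<^sub>m n" by (auto simp: inverse_mats_iff)
  have "Mt n h = Mt n h * (Mt n g * Mt n h')" using 1 c by (simp add: right_mult_one_mat)
  also have "\<dots> = (Mt n h * Mt n g) * Mt n h'" using c by (simp add: assoc_mult_mat[of _ n n _ n _ n])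
  also have "\<dots> = Mt n h'" using 1 c by simp
  finally have "Mt n h = Mt n h'" .
  then show ?thesis using assms(3,4) by (metis Mt_index)
qed

lemma inverse_mats_det:
  assumes "inverse_mats n g h" shows "det (Mt n g) \<noteq> 0"
proof -
  have "det (Mt n g * Mt n h) = 1" using assms by (simp add: inverse_mats_iff)
  then have "det (Mt n g) * det (Mt n h) = 1" by (simp add: det_mult[of _ n])
  then show ?thesis by auto
qed

lemma adj_inverse:
  fixes g :: "nat \<Rightarrow> nat \<Rightarrow> 'k::field"
  assumes "det (Mt n g) \<noteq> 0"
  shows "inverse_mats n g (\<lambda>l j. adj_mat (Mt n g) $$ (l,j) / det (Mt n g))"
proof -
  let ?A = "Mt n g" and ?D = "det (Mt n g)"
  have A: "?A \<in> carrier_mat n n" by simp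
  note adj = adj_mat[OF A]
  have "?A * (inverse ?D \<cdot>\<^sub>m adj_mat ?A) = inverse ?D \<cdot>\<^sub>m (?A * adj_mat ?A)"
    by (rule mult_smult_distrib[OF A adj(1)])
  also have "\<dots> = 1\<^sub>m n" unfolding adj(2) using assms by (intro eq_matI) auto
  finally have 1: "?A * (inverse ?D \<cdot>\<^sub>m adj_mat ?A) = 1\<^sub>m n" .
  have "(inverse ?D \<cdot>\<^sub>m adj_mat ?A) * ?A = inverse ?D \<cdot>\<^sub>m (adj_mat ?A * ?A)"
    by (rule mult_smult_assoc_mat[OF adj(1) A])
  also have "\<dots> = 1\<^sub>m n" unfolding adj(3) using assms by (intro eq_matI) auto
  finally have 2: "(inverse ?D \<cdot>\<^sub>m adj_mat ?A) * ?A = 1\<^sub>m n" .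
  have e: "inverse ?D \<cdot>\<^sub>m adj_mat ?A = Mt n (\<lambda>l j. adj_mat ?A $$ (l,j) / ?D)"
    using adj(1) by (intro eq_matI) (auto simp: Mt_def field_simps)
  show ?thesis using 1 2 unfolding e inverse_mats_iff by simp
qed

lemma gl_act_cong:
  assumes "\<forall>v. \<forall>i<d v. \<forall>j<d v. g v i j = g' v i j \<and> h v i j = h' v i j"
  shows "gl_act Q d g h = gl_act Q d g' h'"
  unfolding gl_act_def using assms by (intro ext) (auto intro!: sum.cong)

definition strcoef :: "('v,'a) walk \<Rightarrow> 'a \<Rightarrow> nat \<Rightarrow> nat \<Rightarrow> 'k::field" where
 "strcoef C a p p' = (\<Sum>i<length (snd C). if (snd C ! i = Dir a \<and> p' = i \<and> p = Suc i) \<or>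
     (snd C ! i = Inv a \<and> p' = Suc i \<and> p = i) then 1 else 0)"

definition bandcoef :: "('v,'a) walk \<Rightarrow> (nat \<Rightarrow> nat \<Rightarrow> 'k::field) \<Rightarrow> 'a \<Rightarrow> nat \<Rightarrow> nat \<Rightarrow> nat \<Rightarrow> nat \<Rightarrow> 'k" where
 "bandcoef B M a p c p' c' = (\<Sum>i<length (snd B).
     if (snd B ! i = Dir a \<and> p' = i \<and> p = Suc i mod length (snd B)) \<or>
        (snd B ! i = Inv a \<and> p' = Suc i mod length (snd B) \<and> p = i)
     then (if i = 0 then M c c' else (if c = c' then 1 else 0)) else 0)"

lemma coef_alt: "coef cs a (k,p,c) (k',p',c') = (if k \<noteq> k' then 0 else
   (case cs ! k of StrC C \<Rightarrow> strcoef C a p p' | BandC B lam q \<Rightarrow> bandcoef B (jordan lam) a p c p' c'))"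
  unfolding coef_def strcoef_def bandcoef_def by (simp add: Let_def split: comp.splits)

definition mbasis :: "('v,'a) walk list \<Rightarrow> ('v,'a) walk list \<Rightarrow> nat list \<Rightarrow> (nat \<times> nat \<times> nat) set" where
  "mbasis Cs Bs qs = {(k,p,c). (k < length Cs \<and> p \<le> length (snd (Cs!k)) \<and> c = 0) \<or>
     (length Cs \<le> k \<and> k - length Cs < length Bs \<and> p < length (snd (Bs!(k - length Cs))) \<and> c < qs!(k - length Cs))}"

definition mvert :: "('v,'a) bquiver \<Rightarrow> ('v,'a) walk list \<Rightarrow> ('v,'a) walk list \<Rightarrow> nat \<times> nat \<times> nat \<Rightarrow> 'v" where
  "mvert Q Cs Bs b = (case b of (k,p,c) \<Rightarrow> if k < length Cs then wvert Q (fst (Cs!k)) (snd (Cs!k)) p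
      else wvert Q (fst (Bs!(k-length Cs))) (snd (Bs!(k-length Cs))) p)"

definition MB :: "('v,'a) bquiver \<Rightarrow> ('v,'a) walk list \<Rightarrow> ('v,'a) walk list \<Rightarrow> nat list \<Rightarrow> 'v \<Rightarrow> (nat \<times> nat \<times> nat) set" where
  "MB Q Cs Bs qs v = {b \<in> mbasis Cs Bs qs. mvert Q Cs Bs b = v}"

definition mcoef :: "('v,'a) walk list \<Rightarrow> ('v,'a) walk list \<Rightarrow> (nat \<Rightarrow> nat \<Rightarrow> nat \<Rightarrow> 'k::field) \<Rightarrow> 'a \<Rightarrow>
     nat \<times> nat \<times> nat \<Rightarrow> nat \<times> nat \<times> nat \<Rightarrow> 'k" where
  "mcoef Cs Bs N a b b' = (case (b,b') of ((k,p,c),(k',p',c')) \<Rightarrow> if k \<noteq> k' then 0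
     else if k < length Cs then strcoef (Cs!k) a p p'
     else bandcoef (Bs!(k - length Cs)) (N (k - length Cs)) a p c p' c')"

fun bd :: "('k \<times> nat) list \<Rightarrow> nat \<Rightarrow> nat \<Rightarrow> 'k::field" where
  "bd [] i i' = 0"
| "bd ((lam,q)#ps) i i' = (if i < q \<and> i' < q then jordan lam i i'
      else if q \<le> i \<and> q \<le> i' then bd ps (i-q) (i'-q) else 0)"

lemma bd_offs: "r < length ps \<Longrightarrow> r' < length ps \<Longrightarrow> c < snd (ps!r) \<Longrightarrow> c' < snd (ps!r') \<Longrightarrow>
  bd ps (offs (map snd ps) r + c) (offs (map snd ps) r' + c') = (if r = r' then jordan (fst (ps!r)) c c' else 0)"
proof (induction ps arbitrary: r r')
  case Nil then show ?case by simp
next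
  case (Cons x ps)
  obtain lam q where x: "x = (lam,q)" by force
  show ?case
  proof (cases r)
    case 0
    show ?thesis
    proof (cases r')
      case 0 then show ?thesis using \<open>r = 0\<close> Cons.prems x by simp
    next
      case (Suc s') then show ?thesis using \<open>r = 0\<close> Cons.prems x by simp
    qed
  next
    case (Suc s)
    show ?thesis
    proof (cases r')
      case 0 then show ?thesis using \<open>r = Suc s\<close> Cons.prems x by simp
    next
      case (Suc s') then show ?thesis using \<open>r = Suc s\<close> Cons.prems Cons.IH[of s s'] x by simp
    qed
  qed
qed

definition LL :: "('v,'a) walk list \<Rightarrow> ('k \<times> nat) list list \<Rightarrow> nat list" where
  "LL Bs parts = map (\<lambda>j. length (parts!j)) [0..<length Bs]"

definition sig :: "('v,'a) walk list \<Rightarrow> ('v,'a) walk list \<Rightarrow> ('k \<times> nat) list list \<Rightarrow> nat \<times> nat \<times> nat \<Rightarrow> nat \<times> nat \<times> nat" where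
  "sig Cs Bs parts b = (case b of (k,p,c) \<Rightarrow> if k < length Cs then (k,p,c) else
     (case dec (LL Bs parts) (k - length Cs) of (j,r) \<Rightarrow> (length Cs + j, p, offs (map snd (parts!j)) r + c)))"

definition tau :: "('v,'a) walk list \<Rightarrow> ('v,'a) walk list \<Rightarrow> ('k \<times> nat) list list \<Rightarrow> nat \<times> nat \<times> nat \<Rightarrow> nat \<times> nat \<times> nat" where
  "tau Cs Bs parts b = (case b of (k,p,c) \<Rightarrow> if k < length Cs then (k,p,c) else
     (case dec (map snd (parts!(k - length Cs))) c of (r,c0) \<Rightarrow>
        (length Cs + offs (LL Bs parts) (k - length Cs) + r, p, c0)))"

lemma length_comps: "length (comps Cs Bs parts) = length Cs + sum_list (LL Bs parts)"
  unfolding comps_def LL_def by (simp add: length_concat comp_def)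

lemma comps_str: "k < length Cs \<Longrightarrow> comps Cs Bs parts ! k = StrC (Cs ! k)"
  unfolding comps_def by (simp add: nth_append)

lemma LL_nth: "j < length Bs \<Longrightarrow> LL Bs parts ! j = length (parts ! j)"
  by (simp add: LL_def)

lemma length_LL[simp]: "length (LL Bs parts) = length Bs"
  by (simp add: LL_def)

lemma comps_band: "j < length Bs \<Longrightarrow> r < length (parts!j) \<Longrightarrow>
   comps Cs Bs parts ! (length Cs + offs (LL Bs parts) j + r) = BandC (Bs!j) (fst (parts!j!r)) (snd (parts!j!r))"
proof -
  assume j: "j < length Bs" and r: "r < length (parts!j)"
  let ?L = "map (\<lambda>j. map (\<lambda>(lam,q). BandC (Bs ! j) lam q) (parts ! j)) [0..<length Bs]"
  have mL: "map length ?L = LL Bs parts" by (simp add: LL_def comp_def)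
  have "concat ?L ! (offs (map length ?L) j + r) = ?L ! j ! r"
    by (rule nth_concat_offs) (use j r in auto)
  moreover have "comps Cs Bs parts ! (length Cs + offs (LL Bs parts) j + r) = concat ?L ! (offs (LL Bs parts) j + r)"
    unfolding comps_def by (simp add: nth_append add.assoc)
  moreover have "?L ! j ! r = BandC (Bs!j) (fst (parts!j!r)) (snd (parts!j!r))"
    using j r by (simp add: case_prod_beta)
  ultimately show ?thesis unfolding mL by simp
qed

lemma comps_decode:
  assumes "length Cs \<le> k" "k < length (comps Cs Bs parts)"
  obtains j r where "j < length Bs" "r < length (parts!j)" "k = length Cs + offs (LL Bs parts) j + r"
    "dec (LL Bs parts) (k - length Cs) = (j, r)"
proof -
  have "k - length Cs < sum_list (LL Bs parts)" using assms length_comps[of Cs Bs parts] by simp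
  from dec_props[OF this] obtain j r where d: "dec (LL Bs parts) (k - length Cs) = (j,r)"
    and jr: "j < length Bs" "r < LL Bs parts ! j" "offs (LL Bs parts) j + r = k - length Cs"
    by (metis length_LL prod.collapse)
  show ?thesis using jr d assms(1) LL_nth[OF jr(1), of parts] by (intro that) auto
qed


lemma basis_comps_cases:
  assumes "(k,p,c) \<in> basis (comps Cs Bs parts)"
  shows "(k < length Cs \<and> p \<le> length (snd (Cs!k)) \<and> c = 0) \<or>
    (\<exists>j r. j < length Bs \<and> r < length (parts!j) \<and> k = length Cs + offs (LL Bs parts) j + r \<and>
       p < length (snd (Bs!j)) \<and> c < snd (parts!j!r))"
proof (cases "k < length Cs")
  case True
  have "p \<le> length (snd (Cs!k)) \<and> c = 0" using assms comps_str[OF True, of Bs parts] unfolding basis_def by simp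
  then show ?thesis using True by simp
next
  case False
  have le: "length Cs \<le> k" using False by simp
  have kl: "k < length (comps Cs Bs parts)" using assms unfolding basis_def by simp
  obtain j r where jr: "j < length Bs" "r < length (parts!j)" "k = length Cs + offs (LL Bs parts) j + r"
    using comps_decode[OF le kl] by blast
  then have "comps Cs Bs parts ! k = BandC (Bs!j) (fst (parts!j!r)) (snd (parts!j!r))"
    using comps_band by simp
  then have "p < length (snd (Bs!j)) \<and> c < snd (parts!j!r)" using assms unfolding basis_def by simp
  then show ?thesis using jr by blast
qed

lemma band_in_basis:
  assumes "j < length Bs" "r < length (parts!j)" "p < length (snd (Bs!j))" "c < snd (parts!j!r)"
  shows "(length Cs + offs (LL Bs parts) j + r, p, c) \<in> basis (comps Cs Bs parts)"
proof -
  have "offs (LL Bs parts) j + r < sum_list (LL Bs parts)"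
    using offs_bound[of j "LL Bs parts" r] assms LL_nth[OF assms(1), of parts] by simp
  then show ?thesis using assms comps_band[OF assms(1,2), of Cs] length_comps[of Cs Bs parts]
    by (simp add: basis_def)
qed

lemma str_in_basis:
  assumes "k < length Cs" "p \<le> length (snd (Cs!k))"
  shows "(k, p, 0) \<in> basis (comps Cs Bs parts)"
  using assms comps_str[OF assms(1), of Bs parts] length_comps[of Cs Bs parts] by (simp add: basis_def)

lemma sig_band:
  assumes "j < length Bs" "r < length (parts!j)"
  shows "sig Cs Bs parts (length Cs + offs (LL Bs parts) j + r, p, c) = (length Cs + j, p, offs (map snd (parts!j)) r + c)"
proof -
  have "dec (LL Bs parts) (offs (LL Bs parts) j + r) = (j, r)"
    using dec_offs[of j "LL Bs parts" r] assms LL_nth[OF assms(1), of parts] by simp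
  then show ?thesis by (simp add: sig_def add.assoc)
qed

lemma tau_band:
  assumes "j < length Bs" "r < length (parts!j)" "c < snd (parts!j!r)"
  shows "tau Cs Bs parts (length Cs + j, p, offs (map snd (parts!j)) r + c) = (length Cs + offs (LL Bs parts) j + r, p, c)"
proof -
  have "dec (map snd (parts!j)) (offs (map snd (parts!j)) r + c) = (r, c)"
    using dec_offs[of r "map snd (parts!j)" c] assms by simp
  then show ?thesis by (simp add: tau_def)
qed

lemma bvert_band:
  assumes "j < length Bs" "r < length (parts!j)"
  shows "bvert Q (comps Cs Bs parts) (length Cs + offs (LL Bs parts) j + r, p, c) = wvert Q (fst (Bs!j)) (snd (Bs!j)) p"
  using comps_band[OF assms, of Cs] by (simp add: bvert_def)

lemma bvert_str:
  assumes "k < length Cs"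
  shows "bvert Q (comps Cs Bs parts) (k, p, c) = wvert Q (fst (Cs!k)) (snd (Cs!k)) p"
  using comps_str[OF assms, of Bs parts] by (simp add: bvert_def)

lemma mbasis_cases:
  assumes "(k,p,c) \<in> mbasis Cs Bs qs" "length parts = length Bs"
    "\<forall>j<length Bs. sum_list (map snd (parts!j)) = qs!j"
  shows "(k < length Cs \<and> p \<le> length (snd (Cs!k)) \<and> c = 0) \<or>
    (\<exists>j r c0. j < length Bs \<and> r < length (parts!j) \<and> k = length Cs + j \<and> c = offs (map snd (parts!j)) r + c0 \<and>
       p < length (snd (Bs!j)) \<and> c0 < snd (parts!j!r))"
proof (cases "k < length Cs")
  case True then show ?thesis using assms by (simp add: mbasis_def)
next
  case False
  let ?j = "k - length Cs"
  have j: "?j < length Bs" "p < length (snd (Bs!?j))" "c < qs!?j" using assms False by (auto simp: mbasis_def)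
  then have "c < sum_list (map snd (parts!?j))" using assms(3) by simp
  from dec_props[OF this] obtain r c0 where "r < length (parts!?j)" "c0 < snd (parts!?j!r)"
    "c = offs (map snd (parts!?j)) r + c0"
    by (metis length_map nth_map prod.collapse)
  then show ?thesis using j False by (intro disjI2 exI[of _ ?j] exI[of _ r] exI[of _ c0]) auto
qed

lemma sig_bij:
  assumes "length parts = length Bs" "\<forall>j<length Bs. sum_list (map snd (parts!j)) = qs!j"
  shows "bij_betw (sig Cs Bs parts) {b \<in> basis (comps Cs Bs parts). bvert Q (comps Cs Bs parts) b = v} (MB Q Cs Bs qs v)"
proof (rule bij_betw_byWitness[where f' = "tau Cs Bs parts"])
  show "\<forall>a\<in>{b \<in> basis (comps Cs Bs parts). bvert Q (comps Cs Bs parts) b = v}. tau Cs Bs parts (sig Cs Bs parts a) = a"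
  proof
    fix b assume b: "b \<in> {b \<in> basis (comps Cs Bs parts). bvert Q (comps Cs Bs parts) b = v}"
    obtain k p c where kpc: "b = (k,p,c)" by (cases b)
    have bb: "(k,p,c) \<in> basis (comps Cs Bs parts)" using b kpc by simp
    from basis_comps_cases[OF bb]
    show "tau Cs Bs parts (sig Cs Bs parts b) = b"
    proof (elim disjE exE conjE)
      assume "k < length Cs" then show ?thesis using kpc by (simp add: sig_def tau_def)
    next
      fix j r assume jr: "j < length Bs" "r < length (parts!j)" "k = length Cs + offs (LL Bs parts) j + r"
        "p < length (snd (Bs!j))" "c < snd (parts!j!r)"
      show ?thesis using kpc jr sig_band[OF jr(1,2)] tau_band[OF jr(1,2,5)] by simp
    qed
  qed
  show "\<forall>a\<in>MB Q Cs Bs qs v. sig Cs Bs parts (tau Cs Bs parts a) = a"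
  proof
    fix b assume b: "b \<in> MB Q Cs Bs qs v"
    obtain k p c where kpc: "b = (k,p,c)" by (cases b)
    have bb: "(k,p,c) \<in> mbasis Cs Bs qs" using b kpc by (simp add: MB_def)
    from mbasis_cases[OF bb assms]
    show "sig Cs Bs parts (tau Cs Bs parts b) = b"
    proof (elim disjE exE conjE)
      assume "k < length Cs" then show ?thesis using kpc by (simp add: sig_def tau_def)
    next
      fix j r c0 assume jr: "j < length Bs" "r < length (parts!j)" "k = length Cs + j"
        "c = offs (map snd (parts!j)) r + c0" "p < length (snd (Bs!j))" "c0 < snd (parts!j!r)"
      show ?thesis using kpc jr sig_band[OF jr(1,2)] tau_band[OF jr(1,2,6)] by simp
    qed
  qed
  show "sig Cs Bs parts ` {b \<in> basis (comps Cs Bs parts). bvert Q (comps Cs Bs parts) b = v} \<subseteq> MB Q Cs Bs qs v"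
  proof (rule image_subsetI)
    fix b0 assume b0: "b0 \<in> {b \<in> basis (comps Cs Bs parts). bvert Q (comps Cs Bs parts) b = v}"
    obtain k p c where kpc: "b0 = (k,p,c)" by (cases b0)
    have b: "(k,p,c) \<in> basis (comps Cs Bs parts)" and v: "v = bvert Q (comps Cs Bs parts) (k,p,c)"
      using b0 kpc by auto
    from basis_comps_cases[OF b]
    have "sig Cs Bs parts (k,p,c) \<in> MB Q Cs Bs qs (bvert Q (comps Cs Bs parts) (k,p,c))"
    proof (elim disjE exE conjE)
      assume "k < length Cs" "p \<le> length (snd (Cs!k))" "c = 0"
      then show ?thesis by (simp add: sig_def MB_def mbasis_def mvert_def bvert_str)
    next
      fix j r assume jr: "j < length Bs" "r < length (parts!j)" "k = length Cs + offs (LL Bs parts) j + r"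
        "p < length (snd (Bs!j))" "c < snd (parts!j!r)"
      have "offs (map snd (parts!j)) r + c < qs!j"
        using offs_bound[of r "map snd (parts!j)" c] jr assms by simp
      then show ?thesis using jr sig_band[OF jr(1,2)] bvert_band[OF jr(1,2)]
        by (simp add: MB_def mbasis_def mvert_def)
    qed
    then show "sig Cs Bs parts b0 \<in> MB Q Cs Bs qs v" using kpc v by simp
  qed
  show "tau Cs Bs parts ` MB Q Cs Bs qs v \<subseteq> {b \<in> basis (comps Cs Bs parts). bvert Q (comps Cs Bs parts) b = v}"
  proof (rule image_subsetI)
    fix b0 assume b0: "b0 \<in> MB Q Cs Bs qs v"
    obtain k p c where kpc: "b0 = (k,p,c)" by (cases b0)
    have b: "(k,p,c) \<in> MB Q Cs Bs qs v" using b0 kpc by simp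
    then have b1: "(k,p,c) \<in> mbasis Cs Bs qs" and v: "mvert Q Cs Bs (k,p,c) = v" by (auto simp: MB_def)
    from mbasis_cases[OF b1 assms]
    have "tau Cs Bs parts (k,p,c) \<in> basis (comps Cs Bs parts) \<and> bvert Q (comps Cs Bs parts) (tau Cs Bs parts (k,p,c)) = v"
    proof (elim disjE exE conjE)
      assume "k < length Cs" "p \<le> length (snd (Cs!k))" "c = 0"
      then show ?thesis using v str_in_basis[of k Cs p Bs parts] by (simp add: tau_def mvert_def bvert_str)
    next
      fix j r c0 assume jr: "j < length Bs" "r < length (parts!j)" "k = length Cs + j"
        "c = offs (map snd (parts!j)) r + c0" "p < length (snd (Bs!j))" "c0 < snd (parts!j!r)"
      show ?thesis using jr tau_band[OF jr(1,2,6)] bvert_band[OF jr(1,2)] band_in_basis[OF jr(1,2,5,6)] v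
        by (simp add: mvert_def)
    qed
    then show "tau Cs Bs parts b0 \<in> {b \<in> basis (comps Cs Bs parts). bvert Q (comps Cs Bs parts) b = v}"
      using kpc by simp
  qed
qed


lemma bandcoef_cong: "M c c' = M' x x' \<Longrightarrow> (c = c') = (x = x') \<Longrightarrow>
   bandcoef B M a p c p' c' = bandcoef B M' a p x p' x'"
  unfolding bandcoef_def by (intro sum.cong) auto

lemma bandcoef_zero: "M c c' = 0 \<Longrightarrow> c \<noteq> c' \<Longrightarrow> bandcoef B M a p c p' c' = 0"
  unfolding bandcoef_def by (intro sum.neutral) auto

lemma sig_coef:
  assumes "length parts = length Bs" "b \<in> basis (comps Cs Bs parts)" "b' \<in> basis (comps Cs Bs parts)"
  shows "coef (comps Cs Bs parts) a b b' = mcoef Cs Bs (\<lambda>j. bd (parts!j)) a (sig Cs Bs parts b) (sig Cs Bs parts b')"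
proof -
  obtain k p c where b: "b = (k,p,c)" by (cases b)
  obtain k' p' c' where b': "b' = (k',p',c')" by (cases b')
  have bb: "(k,p,c) \<in> basis (comps Cs Bs parts)" and bb': "(k',p',c') \<in> basis (comps Cs Bs parts)"
    using assms b b' by auto
  from basis_comps_cases[OF bb] show ?thesis
  proof (elim disjE exE conjE)
    assume k: "k < length Cs"
    from basis_comps_cases[OF bb'] show ?thesis
    proof (elim disjE exE conjE)
      assume k': "k' < length Cs"
      show ?thesis using k k' b b' comps_str[OF k, of Bs parts] comps_str[OF k', of Bs parts]
        by (simp add: coef_alt mcoef_def sig_def)
    next
      fix j' r' assume jr': "j' < length Bs" "r' < length (parts!j')" "k' = length Cs + offs (LL Bs parts) j' + r'"
      show ?thesis using k b b' jr' sig_band[OF jr'(1,2), of Cs p' c'] by (simp add: coef_alt mcoef_def sig_def)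
    qed
  next
    fix j r assume jr: "j < length Bs" "r < length (parts!j)" "k = length Cs + offs (LL Bs parts) j + r"
      "p < length (snd (Bs!j))" "c < snd (parts!j!r)"
    from basis_comps_cases[OF bb'] show ?thesis
    proof (elim disjE exE conjE)
      assume k': "k' < length Cs"
      show ?thesis using k' b b' jr sig_band[OF jr(1,2), of Cs p c] by (simp add: coef_alt mcoef_def sig_def)
    next
      fix j' r' assume jr': "j' < length Bs" "r' < length (parts!j')" "k' = length Cs + offs (LL Bs parts) j' + r'"
        "p' < length (snd (Bs!j'))" "c' < snd (parts!j'!r')"
      have sb: "sig Cs Bs parts b = (length Cs + j, p, offs (map snd (parts!j)) r + c)"
        using b jr sig_band[OF jr(1,2), of Cs p c] by simp
      have sb': "sig Cs Bs parts b' = (length Cs + j', p', offs (map snd (parts!j')) r' + c')"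
        using b' jr' sig_band[OF jr'(1,2), of Cs p' c'] by simp
      have keq: "(k = k') = (j = j' \<and> r = r')"
      proof -
        have "(offs (LL Bs parts) j + r = offs (LL Bs parts) j' + r') = (j = j' \<and> r = r')"
          by (rule offs_inj) (use jr jr' LL_nth[OF jr(1), of parts] LL_nth[OF jr'(1), of parts] in auto)
        then show ?thesis using jr jr' by simp
      qed
      show ?thesis
      proof (cases "j = j'")
        case False
        then show ?thesis using keq sb sb' b b' by (simp add: coef_alt mcoef_def)
      next
        case True
        note jj = True
        have inj: "(offs (map snd (parts!j)) r + c = offs (map snd (parts!j)) r' + c') = (r = r' \<and> c = c')"
          by (rule offs_inj) (use jr jr' jj in auto)
        have bdv: "bd (parts!j) (offs (map snd (parts!j)) r + c) (offs (map snd (parts!j)) r' + c') =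
            (if r = r' then jordan (fst (parts!j!r)) c c' else 0)"
          by (rule bd_offs) (use jr jr' jj in auto)
        show ?thesis
        proof (cases "r = r'")
          case False
          have "bandcoef (Bs ! j) (bd (parts ! j)) a p (offs (map snd (parts!j)) r + c) p' (offs (map snd (parts!j)) r' + c') = 0"
            by (rule bandcoef_zero) (use bdv inj False in auto)
          then show ?thesis using keq sb sb' b b' False jj by (simp add: coef_alt mcoef_def)
        next
          case True
          have ck: "comps Cs Bs parts ! k = BandC (Bs!j) (fst (parts!j!r)) (snd (parts!j!r))"
            using comps_band[OF jr(1,2), of Cs] jr by simp
          have "bandcoef (Bs ! j) (jordan (fst (parts!j!r))) a p c p' c' =
            bandcoef (Bs ! j) (bd (parts ! j)) a p (offs (map snd (parts!j)) r + c) p' (offs (map snd (parts!j)) r' + c')"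
            by (rule bandcoef_cong) (use bdv inj True in auto)
          then show ?thesis using keq sb sb' b b' True jj ck by (simp add: coef_alt mcoef_def)
        qed
      qed
    qed
  qed
qed

lemma sum_list_map_nth: "sum_list (map f xs) = (\<Sum>k<length xs. f (xs ! k))"
  by (simp add: sum_list_sum_nth atLeast0LessThan)

lemma MB_card:
  "finite (MB Q Cs Bs qs v) \<and> card (MB Q Cs Bs qs v) = dimD Q Cs Bs qs v"
proof -
  define P where "P k = {p. p \<le> length (snd (Cs!k)) \<and> wvert Q (fst (Cs!k)) (snd (Cs!k)) p = v}" for k
  define R where "R j = {p. p < length (snd (Bs!j)) \<and> wvert Q (fst (Bs!j)) (snd (Bs!j)) p = v}" for j
  define A where "A = (\<Union>k<length Cs. (\<lambda>p. (k,p,0::nat)) ` P k)"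
  define B where "B = (\<Union>j<length Bs. (\<lambda>(p,c). (length Cs + j, p, c)) ` (R j \<times> {..<qs!j}))"
  have fP: "finite (P k)" for k unfolding P_def by (rule finite_subset[of _ "{..length (snd (Cs!k))}"]) auto
  have fR: "finite (R j)" for j unfolding R_def by (rule finite_subset[of _ "{..<length (snd (Bs!j))}"]) auto
  have eq: "MB Q Cs Bs qs v = A \<union> B"
  proof (rule Set.set_eqI, rule iffI)
    fix b assume "b \<in> MB Q Cs Bs qs v"
    then obtain k p c where b: "b = (k,p,c)" and m: "(k,p,c) \<in> mbasis Cs Bs qs" "mvert Q Cs Bs (k,p,c) = v"
      unfolding MB_def by (cases b) auto
    show "b \<in> A \<union> B"
    proof (cases "k < length Cs")
      case True
      then show ?thesis using m b unfolding A_def P_def by (auto simp: mbasis_def mvert_def)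
    next
      case False
      let ?j = "k - length Cs"
      have "(p,c) \<in> R ?j \<times> {..<qs!?j}" "?j < length Bs" using m False by (auto simp: mbasis_def mvert_def R_def)
      moreover have "b = (\<lambda>(p,c). (length Cs + ?j, p, c)) (p,c)" using b False by simp
      ultimately show ?thesis unfolding B_def by blast
    qed
  next
    fix b assume "b \<in> A \<union> B"
    then show "b \<in> MB Q Cs Bs qs v"
      unfolding A_def B_def P_def R_def by (auto simp: MB_def mbasis_def mvert_def)
  qed
  have fA: "finite A" unfolding A_def using fP by auto
  have fB: "finite B" unfolding B_def using fR by auto
  have dis: "A \<inter> B = {}" unfolding A_def B_def by auto
  have cA: "card A = (\<Sum>k<length Cs. card (P k))"
    unfolding A_def
  proof (subst card_UN_disjoint)
    show "(\<Sum>i<length Cs. card ((\<lambda>p. (i, p, 0::nat)) ` P i)) = (\<Sum>k<length Cs. card (P k))"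
      by (intro sum.cong refl card_image) (auto simp: inj_on_def)
  qed (use fP in auto)
  have cB: "card B = (\<Sum>j<length Bs. qs ! j * card (R j))"
    unfolding B_def
  proof (subst card_UN_disjoint)
    show "(\<Sum>i<length Bs. card ((\<lambda>(p,c). (length Cs + i, p, c)) ` (R i \<times> {..<qs!i}))) = (\<Sum>j<length Bs. qs ! j * card (R j))"
    proof (intro sum.cong refl)
      fix j
      have "card ((\<lambda>(p,c). (length Cs + j, p, c)) ` (R j \<times> {..<qs!j})) = card (R j \<times> {..<qs!j})"
        by (rule card_image) (auto simp: inj_on_def)
      also have "\<dots> = qs ! j * card (R j)" by (simp add: card_cartesian_product)
      finally show "card ((\<lambda>(p,c). (length Cs + j, p, c)) ` (R j \<times> {..<qs!j})) = qs ! j * card (R j)" .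
    qed
  qed (use fR in auto)
  have "dimD Q Cs Bs qs v = (\<Sum>k<length Cs. card (P k)) + (\<Sum>j<length Bs. qs ! j * card (R j))"
    unfolding dimD_def P_def R_def sum_list_map_nth by simp
  then show ?thesis using eq fA fB dis cA cB by (simp add: card_Un_disjoint)
qed

lemma MB_enum: "\<exists>e. bij_betw e {..<dimD Q Cs Bs qs v} (MB Q Cs Bs qs v)"
proof -
  have "finite (MB Q Cs Bs qs v)" "card (MB Q Cs Bs qs v) = dimD Q Cs Bs qs v" using MB_card[of Q Cs Bs qs v] by auto
  then show ?thesis by (metis bij_betw_iff_card card_lessThan finite_lessThan)
qed


lemma nonzero_sum_ex: "(\<Sum>i\<in>A. f i) \<noteq> (0::'k::comm_monoid_add) \<Longrightarrow> \<exists>i\<in>A. f i \<noteq> 0"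
  by (meson sum.neutral)

lemma string_ok: "is_string Q C \<Longrightarrow> Suc i < length (snd C) \<Longrightarrow> ok_pair Q (snd C ! i) (snd C ! Suc i)"
  by (simp add: is_string_def)

lemma band_ok:
  assumes "is_band Q B" "i < length (snd B)"
  shows "ok_pair Q (snd B ! i) (snd B ! (Suc i mod length (snd B)))"
proof -
  let ?w = "snd B"
  have "is_string Q (fst B, concat (replicate 2 ?w))" using assms(1) by (simp add: is_band_def)
  moreover have "concat (replicate 2 ?w) = ?w @ ?w" by (simp add: numeral_2_eq_2)
  ultimately have ok: "\<And>k. Suc k < length (?w @ ?w) \<Longrightarrow> ok_pair Q ((?w @ ?w) ! k) ((?w @ ?w) ! Suc k)"
    by (simp add: is_string_def)
  have "ok_pair Q ((?w @ ?w) ! i) ((?w @ ?w) ! Suc i)" using assms(2) by (intro ok) simp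
  moreover have "(?w @ ?w) ! i = ?w ! i" using assms(2) by (simp add: nth_append)
  moreover have "(?w @ ?w) ! Suc i = ?w ! (Suc i mod length ?w)"
  proof (cases "Suc i < length ?w")
    case True then show ?thesis by (simp add: nth_append)
  next
    case False
    then have "Suc i = length ?w" using assms(2) by simp
    then show ?thesis by (simp add: nth_append)
  qed
  ultimately show ?thesis by simp
qed

lemma str_rel:
  assumes "is_string Q C" "(a,b) \<in> rels Q"
  shows "strcoef C b p p'' = (0::'k::field) \<or> strcoef C a p'' p' = (0::'k)"
proof (rule ccontr)
  assume "\<not> ?thesis"
  then have n1: "strcoef C b p p'' \<noteq> (0::'k)" and n2: "strcoef C a p'' p' \<noteq> (0::'k)" by auto
  let ?w = "snd C"
  from nonzero_sum_ex[OF n1[unfolded strcoef_def]] obtain i where i: "i < length ?w"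
    "(?w ! i = Dir b \<and> p'' = i \<and> p = Suc i) \<or> (?w ! i = Inv b \<and> p'' = Suc i \<and> p = i)"
    by (auto split: if_splits)
  from nonzero_sum_ex[OF n2[unfolded strcoef_def]] obtain i' where i': "i' < length ?w"
    "(?w ! i' = Dir a \<and> p' = i' \<and> p'' = Suc i') \<or> (?w ! i' = Inv a \<and> p' = Suc i' \<and> p'' = i')"
    by (auto split: if_splits)
  from i(2) i'(2) show False
  proof (elim disjE conjE)
    assume "?w ! i = Dir b" "p'' = i" "?w ! i' = Dir a" "p'' = Suc i'"
    then show False using string_ok[OF assms(1), of i'] i assms(2) by simp
  next
    assume "?w ! i = Inv b" "p'' = Suc i" "?w ! i' = Inv a" "p'' = i'"
    then show False using string_ok[OF assms(1), of i] i' assms(2) by simp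
  qed auto
qed

lemma band_rel:
  assumes "is_band Q B" "(a,b) \<in> rels Q"
  shows "bandcoef B M b p c p'' c'' = (0::'k::field) \<or> bandcoef B M' a p'' c'' p' c' = (0::'k)"
proof (rule ccontr)
  assume "\<not> ?thesis"
  then have n1: "bandcoef B M b p c p'' c'' \<noteq> (0::'k)" and n2: "bandcoef B M' a p'' c'' p' c' \<noteq> (0::'k)" by auto
  let ?w = "snd B"
  let ?m = "length ?w"
  from nonzero_sum_ex[OF n1[unfolded bandcoef_def]] obtain i where i: "i < ?m"
    "(?w ! i = Dir b \<and> p'' = i \<and> p = Suc i mod ?m) \<or> (?w ! i = Inv b \<and> p'' = Suc i mod ?m \<and> p = i)"
    by (auto split: if_splits)
  from nonzero_sum_ex[OF n2[unfolded bandcoef_def]] obtain i' where i': "i' < ?m"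
    "(?w ! i' = Dir a \<and> p' = i' \<and> p'' = Suc i' mod ?m) \<or> (?w ! i' = Inv a \<and> p' = Suc i' mod ?m \<and> p'' = i')"
    by (auto split: if_splits)
  have modinj: "Suc x mod ?m = Suc y mod ?m \<Longrightarrow> x < ?m \<Longrightarrow> y < ?m \<Longrightarrow> x = y" for x y
  proof -
    assume "Suc x mod ?m = Suc y mod ?m" "x < ?m" "y < ?m"
    then show "x = y"
      by (metis Suc_lessI mod_less mod_self nat.inject zero_neq_one nat.distinct(1) less_irrefl_nat)
  qed
  from i(2) i'(2) show False
  proof (elim disjE conjE)
    assume "?w ! i = Dir b" "p'' = i" "?w ! i' = Dir a" "p'' = Suc i' mod ?m"
    then show False using band_ok[OF assms(1) i'(1)] assms(2) by simp
  next
    assume "?w ! i = Inv b" "p'' = Suc i mod ?m" "?w ! i' = Inv a" "p'' = i'"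
    then show False using band_ok[OF assms(1) i(1)] assms(2) by simp
  next
    assume "?w ! i = Inv b" "p'' = Suc i mod ?m" "?w ! i' = Dir a" "p'' = Suc i' mod ?m"
    then show False using modinj[of i i'] i(1) i'(1) by auto
  qed auto
qed

lemma mcoef_rel:
  assumes "\<forall>C\<in>set Cs. is_string Q C" "\<forall>j<length Bs. is_band Q (Bs ! j)" "(a,b) \<in> rels Q"
    and "x \<in> mbasis Cs Bs qs"
  shows "mcoef Cs Bs N b b1 x = 0 \<or> mcoef Cs Bs N a x b2 = 0"
proof -
  obtain k p c where b1: "b1 = (k,p,c)" by (cases b1)
  obtain k' p' c' where b2: "b2 = (k',p',c')" by (cases b2)
  obtain k'' p'' c'' where x: "x = (k'',p'',c'')" by (cases x)
  show ?thesis
  proof (cases "k = k'' \<and> k'' = k'")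
    case False then show ?thesis using b1 b2 x by (auto simp: mcoef_def)
  next
    case True
    show ?thesis
    proof (cases "k'' < length Cs")
      case True
      then have "is_string Q (Cs ! k'')" using assms(1) by simp
      from str_rel[OF this assms(3)] show ?thesis using b1 b2 x \<open>k = k'' \<and> k'' = k'\<close> True
        by (auto simp: mcoef_def)
    next
      case False
      then have "k'' - length Cs < length Bs" using assms(4) x by (auto simp: mbasis_def)
      then have "is_band Q (Bs ! (k'' - length Cs))" using assms(2) by simp
      from band_rel[OF this assms(3), of "N (k'' - length Cs)" p c p'' c'' "N (k'' - length Cs)" p' c'] show ?thesis using b1 b2 x \<open>k = k'' \<and> k'' = k'\<close> False
        by (auto simp: mcoef_def)
    qed
  qed
qed


lemma gentle_ends: "gentle Q \<Longrightarrow> \<forall>a\<in>arrs Q. src Q a \<in> verts Q \<and> tgt Q a \<in> verts Q"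
  by (simp add: gentle_def)

lemma gentle_rels: "gentle Q \<Longrightarrow> (a,b) \<in> rels Q \<Longrightarrow> a \<in> arrs Q \<and> b \<in> arrs Q \<and> tgt Q a = src Q b"
  unfolding gentle_def by blast

lemma repc_aff: "repc Q d c e \<in> aff Q d"
  by (simp add: aff_def repc_def)

lemma gl_act_aff: "gl_act Q d g h y \<in> aff Q d"
  by (simp add: aff_def gl_act_def)

lemma repc_modvar:
  assumes G: "gentle Q" and S: "\<forall>C\<in>set Cs. is_string Q C" and B: "\<forall>j<length Bs. is_band Q (Bs ! j)"
    and e0: "\<forall>v\<in>verts Q. bij_betw (e0 v) {..<d v} (MB Q Cs Bs qs v)"
  shows "repc Q d (mcoef Cs Bs N) e0 \<in> modvar Q d"
  unfolding modvar_def
proof (intro CollectI conjI repc_aff ballI allI, clarify)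
  fix a b i j assume r: "(a,b) \<in> rels Q"
  have ab: "a \<in> arrs Q" "b \<in> arrs Q" "tgt Q a = src Q b" using gentle_rels[OF G r] by auto
  have vt: "tgt Q a \<in> verts Q" using gentle_ends[OF G] ab by auto
  let ?y = "repc Q d (mcoef Cs Bs N) e0"
  show "(\<Sum>l<d (tgt Q a). ?y b i l * ?y a l j) = 0"
  proof (rule sum.neutral, rule ballI)
    fix l assume l: "l \<in> {..<d (tgt Q a)}"
    show "?y b i l * ?y a l j = 0"
    proof (cases "i < d (tgt Q b) \<and> j < d (src Q a)")
      case False then show ?thesis by (auto simp: repc_def)
    next
      case True
      have x: "e0 (tgt Q a) l \<in> mbasis Cs Bs qs"
        using e0 vt l by (auto simp: MB_def dest: bij_betwE)
      from mcoef_rel[OF S B r x, of N "e0 (tgt Q b) i" "e0 (src Q a) j"]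
      show ?thesis using True ab l by (auto simp: repc_def)
    qed
  qed
qed

definition Mr :: "nat \<Rightarrow> nat \<Rightarrow> (nat \<Rightarrow> nat \<Rightarrow> 'k::comm_ring_1) \<Rightarrow> 'k mat" where
  "Mr r c f = mat r c (\<lambda>(i,j). f i j)"

lemma Mr_carrier[simp]: "Mr r c f \<in> carrier_mat r c" by (simp add: Mr_def)
lemma Mr_index[simp]: "i < r \<Longrightarrow> j < c \<Longrightarrow> Mr r c f $$ (i,j) = f i j" by (simp add: Mr_def)
lemma Mr_dims[simp]: "dim_row (Mr r c f) = r" "dim_col (Mr r c f) = c" by (auto simp: Mr_def)

lemma Mr_mult: "Mr r n f * Mr n c g = Mr r c (\<lambda>i j. \<Sum>l<n. f i l * g l j)"
  by (rule eq_matI) (auto simp: Mr_def scalar_prod_def lessThan_atLeast0 intro!: sum.cong)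

lemma gl_act_Mr:
  assumes "a \<in> arrs Q"
  shows "Mr (d (tgt Q a)) (d (src Q a)) (gl_act Q d g h y a) =
    Mr (d (tgt Q a)) (d (tgt Q a)) (g (tgt Q a)) * Mr (d (tgt Q a)) (d (src Q a)) (y a) * Mr (d (src Q a)) (d (src Q a)) (h (src Q a))"
  unfolding Mr_mult
proof (rule eq_matI)
  fix i j
  assume "i < dim_row (Mr (d (tgt Q a)) (d (src Q a)) (\<lambda>i j. \<Sum>l<d (src Q a). (\<Sum>l'<d (tgt Q a). g (tgt Q a) i l' * y a l' l) * h (src Q a) l j))"
    "j < dim_col (Mr (d (tgt Q a)) (d (src Q a)) (\<lambda>i j. \<Sum>l<d (src Q a). (\<Sum>l'<d (tgt Q a). g (tgt Q a) i l' * y a l' l) * h (src Q a) l j))"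
  then have ij: "i < d (tgt Q a)" "j < d (src Q a)" by auto
  have "(\<Sum>l<d (src Q a). (\<Sum>l'<d (tgt Q a). g (tgt Q a) i l' * y a l' l) * h (src Q a) l j) =
     (\<Sum>l'<d (tgt Q a). \<Sum>l<d (src Q a). g (tgt Q a) i l' * y a l' l * h (src Q a) l j)"
    by (simp add: sum_distrib_right) (rule sum.swap)
  then show "Mr (d (tgt Q a)) (d (src Q a)) (gl_act Q d g h y a) $$ (i, j) =
     Mr (d (tgt Q a)) (d (src Q a)) (\<lambda>i j. \<Sum>l<d (src Q a). (\<Sum>l'<d (tgt Q a). g (tgt Q a) i l' * y a l' l) * h (src Q a) l j) $$ (i, j)"
    using ij assms by (simp add: gl_act_def)
qed auto

lemma gl_act_modvar:
  assumes G: "gentle Q" and x: "x \<in> modvar Q d"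
    and inv: "\<forall>v\<in>verts Q. inverse_mats (d v) (g v) (h v)"
  shows "gl_act Q d g h x \<in> modvar Q d"
  unfolding modvar_def
proof (intro CollectI conjI gl_act_aff ballI allI, clarify)
  fix a b i j assume r: "(a,b) \<in> rels Q"
  have ab: "a \<in> arrs Q" "b \<in> arrs Q" "tgt Q a = src Q b" using gentle_rels[OF G r] by auto
  have vs: "tgt Q a \<in> verts Q" using gentle_ends[OF G] ab by auto
  let ?z = "gl_act Q d g h x"
  show "(\<Sum>l<d (tgt Q a). ?z b i l * ?z a l j) = 0"
  proof (cases "i < d (tgt Q b) \<and> j < d (src Q a)")
    case False then show ?thesis by (auto simp: gl_act_def intro!: sum.neutral)
  next
    case True
    let ?tb = "d (tgt Q b)" and ?w = "d (tgt Q a)" and ?sa = "d (src Q a)"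
    let ?Gb = "Mr ?tb ?tb (g (tgt Q b))" and ?Yb = "Mr ?tb ?w (x b)" and ?Hw = "Mr ?w ?w (h (tgt Q a))"
    let ?Gw = "Mr ?w ?w (g (tgt Q a))" and ?Ya = "Mr ?w ?sa (x a)" and ?Ha = "Mr ?sa ?sa (h (src Q a))"
    have HG: "?Hw * ?Gw = 1\<^sub>m ?w" using inv vs
      by (metis Mr_def Mt_def inverse_mats_iff)
    have YY: "?Yb * ?Ya = 0\<^sub>m ?tb ?sa"
    proof -
      have "\<forall>i j. (\<Sum>l<?w. x b i l * x a l j) = 0" using x r unfolding modvar_def by blast
      then show ?thesis unfolding Mr_mult by (intro eq_matI) auto
    qed
    have zb: "Mr ?tb ?w (?z b) = ?Gb * ?Yb * ?Hw" using gl_act_Mr[OF ab(2), of d g h x] ab(3) by simp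
    have za: "Mr ?w ?sa (?z a) = ?Gw * ?Ya * ?Ha" using gl_act_Mr[OF ab(1), of d g h x] by simp
    have c: "?Gb \<in> carrier_mat ?tb ?tb" "?Yb \<in> carrier_mat ?tb ?w" "?Hw \<in> carrier_mat ?w ?w"
      "?Gw \<in> carrier_mat ?w ?w" "?Ya \<in> carrier_mat ?w ?sa" "?Ha \<in> carrier_mat ?sa ?sa" by auto
    have "?Gb * ?Yb * ?Hw * (?Gw * ?Ya * ?Ha) = (?Gb * ?Yb) * (?Hw * (?Gw * ?Ya * ?Ha))"
      by (rule assoc_mult_mat[of _ ?tb ?w _ ?w _ ?sa]) (use c in auto)
    also have "?Hw * (?Gw * ?Ya * ?Ha) = ?Hw * (?Gw * (?Ya * ?Ha))"
      using assoc_mult_mat[OF c(4) c(5) c(6)] by simp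
    also have "\<dots> = (?Hw * ?Gw) * (?Ya * ?Ha)"
      by (rule assoc_mult_mat[symmetric, of _ ?w ?w _ ?w _ ?sa]) (use c in auto)
    also have "\<dots> = ?Ya * ?Ha" unfolding HG by (rule left_mult_one_mat) (use c in auto)
    also have "?Gb * ?Yb * (?Ya * ?Ha) = ?Gb * (?Yb * (?Ya * ?Ha))"
      by (rule assoc_mult_mat[of _ ?tb ?tb _ ?w _ ?sa]) (use c in auto)
    also have "?Yb * (?Ya * ?Ha) = (?Yb * ?Ya) * ?Ha"
      by (rule assoc_mult_mat[symmetric, of _ ?tb ?w _ ?sa _ ?sa]) (use c in auto)
    also have "\<dots> = 0\<^sub>m ?tb ?sa" unfolding YY by (rule left_mult_zero_mat) (use c in auto)
    also have "?Gb * 0\<^sub>m ?tb ?sa = 0\<^sub>m ?tb ?sa" by (rule right_mult_zero_mat) (use c in auto)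
    finally have P: "Mr ?tb ?w (?z b) * Mr ?w ?sa (?z a) = 0\<^sub>m ?tb ?sa" unfolding zb za .
    have "(Mr ?tb ?w (?z b) * Mr ?w ?sa (?z a)) $$ (i,j) = (\<Sum>l<?w. ?z b i l * ?z a l j)"
      unfolding Mr_mult using True by simp
    then show ?thesis using P True by simp
  qed
qed

definition e0 :: "('v,'a) bquiver \<Rightarrow> ('v,'a) walk list \<Rightarrow> ('v,'a) walk list \<Rightarrow> nat list \<Rightarrow> 'v \<Rightarrow> nat \<Rightarrow> nat \<times> nat \<times> nat" where
  "e0 Q Cs Bs qs v = (SOME e. bij_betw e {..<dimD Q Cs Bs qs v} (MB Q Cs Bs qs v))"

lemma e0_bij: "bij_betw (e0 Q Cs Bs qs v) {..<dimD Q Cs Bs qs v} (MB Q Cs Bs qs v)"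
  unfolding e0_def using MB_enum by (rule someI_ex)

definition trinv :: "nat list \<Rightarrow> (nat \<Rightarrow> nat \<Rightarrow> nat \<Rightarrow> 'k::field) \<Rightarrow> bool" where
  "trinv qs N \<longleftrightarrow> (\<forall>j<length qs. \<forall>i<qs!j. N j i i \<noteq> 0 \<and> (\<forall>i'<i. N j i i' = 0))"

definition MS :: "('v,'a) bquiver \<Rightarrow> ('v,'a) walk list \<Rightarrow> ('v,'a) walk list \<Rightarrow> nat list \<Rightarrow> ('a,'k::field) point set" where
  "MS Q Cs Bs qs = {gl_act Q (dimD Q Cs Bs qs) g h (repc Q (dimD Q Cs Bs qs) (mcoef Cs Bs N) (e0 Q Cs Bs qs)) | g h N.
      (\<forall>v\<in>verts Q. inverse_mats (dimD Q Cs Bs qs v) (g v) (h v)) \<and> trinv qs N}"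

lemma sum_delta_l: "finite A \<Longrightarrow> b \<in> A \<Longrightarrow> (\<Sum>x\<in>A. (if b = x then 1 else 0) * f x) = (f b :: 'k::comm_ring_1)"
proof -
  assume "finite A" "b \<in> A"
  have "(\<Sum>x\<in>A. (if b = x then 1 else 0) * f x) = (\<Sum>x\<in>A. if b = x then f x else 0)"
    by (intro sum.cong) auto
  then show ?thesis using \<open>finite A\<close> \<open>b \<in> A\<close> by simp
qed

lemma sum_delta_r: "finite A \<Longrightarrow> b \<in> A \<Longrightarrow> (\<Sum>x\<in>A. f x * (if x = b then 1 else 0)) = (f b :: 'k::comm_ring_1)"
proof -
  assume "finite A" "b \<in> A"
  have "(\<Sum>x\<in>A. f x * (if x = b then 1 else 0)) = (\<Sum>x\<in>A. if b = x then f x else 0)"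
    by (intro sum.cong) auto
  then show ?thesis using \<open>finite A\<close> \<open>b \<in> A\<close> by simp
qed

lemma bd_trinv:
  assumes "length parts = length Bs" "length qs = length Bs"
    and adm: "\<forall>j<length Bs. (\<forall>(lam,q)\<in>set (parts ! j). lam \<noteq> 0 \<and> q \<ge> 1) \<and> sum_list (map snd (parts ! j)) = qs ! j"
  shows "trinv qs (\<lambda>j. bd (parts!j))"
  unfolding trinv_def
proof (intro allI impI, rule conjI)
  fix j i assume j: "j < length qs" and i: "i < qs ! j"
  have jB: "j < length Bs" using j assms by simp
  let ?ps = "parts ! j"
  have "i < sum_list (map snd ?ps)" using adm jB i by simp
  from dec_props[OF this] obtain r c where rc: "r < length ?ps" "c < snd (?ps ! r)" "i = offs (map snd ?ps) r + c"
    by (metis length_map nth_map prod.collapse)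
  have inset: "?ps ! r \<in> set ?ps" using rc by simp
  obtain lm qq where lq: "?ps ! r = (lm, qq)" by (cases "?ps ! r")
  have "lm \<noteq> 0" using adm jB inset lq by fastforce
  then have lam: "fst (?ps ! r) \<noteq> 0" using lq by simp
  show "bd ?ps i i \<noteq> 0" using bd_offs[OF rc(1) rc(1) rc(2) rc(2)] rc lam by (simp add: jordan_def)
  show "\<forall>i'<i. bd ?ps i i' = 0"
  proof (intro allI impI)
    fix i' assume i': "i' < i"
    then have "i' < sum_list (map snd ?ps)" using \<open>i < sum_list (map snd ?ps)\<close> by simp
    from dec_props[OF this] obtain r' c' where rc': "r' < length ?ps" "c' < snd (?ps ! r')" "i' = offs (map snd ?ps) r' + c'"
      by (metis length_map nth_map prod.collapse)
    show "bd ?ps i i' = 0"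
    proof (cases "r = r'")
      case True then show ?thesis using bd_offs[OF rc(1) rc'(1) rc(2) rc'(2)] rc rc' i' by (simp add: jordan_def)
    next
      case False then show ?thesis using bd_offs[OF rc(1) rc'(1) rc(2) rc'(2)] rc rc' i' by simp
    qed
  qed
qed

lemma famO_sub_MS:
  assumes G: "gentle Q" and lq: "length qs = length Bs"
  shows "(famO Q Cs Bs qs :: ('a,'k::field) point set) \<subseteq> MS Q Cs Bs qs"
proof
  fix x :: "('a,'k) point" assume "x \<in> famO Q Cs Bs qs"
  let ?d = "dimD Q Cs Bs qs"
  obtain parts :: "('k \<times> nat) list list" and e where lp: "length parts = length Bs"
    and adm: "\<forall>j<length Bs. (\<forall>(lam,q)\<in>set (parts ! j). lam \<noteq> 0 \<and> q \<ge> 1) \<and> sum_list (map snd (parts ! j)) = qs ! j"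
    and eb: "\<forall>v\<in>verts Q. bij_betw (e v) {..<?d v} {b \<in> basis (comps Cs Bs parts). bvert Q (comps Cs Bs parts) b = v}"
    and xo: "x \<in> gl_orbit Q ?d (rep_point Q ?d (comps Cs Bs parts) e)"
    using \<open>x \<in> famO Q Cs Bs qs\<close> unfolding famO_def Let_def by blast
  obtain g h where gh: "\<forall>v\<in>verts Q. inverse_mats (?d v) (g v) (h v)"
    and x: "x = gl_act Q ?d g h (rep_point Q ?d (comps Cs Bs parts) e)"
    using xo unfolding gl_orbit_def by blast
  define N where "N = (\<lambda>j. bd (parts ! j))"
  define e2 where "e2 = (\<lambda>v i. sig Cs Bs parts (e v i))"
  have ends: "\<forall>a\<in>arrs Q. src Q a \<in> verts Q \<and> tgt Q a \<in> verts Q" using gentle_ends[OF G] .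
  have sums: "\<forall>j<length Bs. sum_list (map snd (parts!j)) = qs!j" using adm by blast
  have e2b: "\<forall>v\<in>verts Q. bij_betw (e2 v) {..<?d v} (MB Q Cs Bs qs v)"
    unfolding e2_def using eb sig_bij[OF lp sums] by (auto intro: bij_betw_trans[unfolded comp_def])
  have r1: "rep_point Q ?d (comps Cs Bs parts) e = repc Q ?d (mcoef Cs Bs N) e2"
    unfolding rep_point_repc
  proof (intro ext)
    fix a i j
    show "repc Q ?d (coef (comps Cs Bs parts)) e a i j = repc Q ?d (mcoef Cs Bs N) e2 a i j"
    proof (cases "a \<in> arrs Q \<and> i < ?d (tgt Q a) \<and> j < ?d (src Q a)")
      case False then show ?thesis by (auto simp: repc_def)
    next
      case True
      have bi: "e (tgt Q a) i \<in> basis (comps Cs Bs parts)" and bj: "e (src Q a) j \<in> basis (comps Cs Bs parts)"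
        using eb ends True by (auto dest!: bij_betwE)
      show ?thesis using True sig_coef[OF lp bi bj] by (simp add: repc_def e2_def N_def)
    qed
  qed
  let ?S = "\<lambda>b b'. if b = b' then (1::'k) else 0"
  have fin: "finite (MB Q Cs Bs qs v)" for v using MB_card[of Q Cs Bs qs v] by blast
  have bc: "repc Q ?d (mcoef Cs Bs N) e2 = gl_act Q ?d (\<lambda>v i l. ?S (e2 v i) (e0 Q Cs Bs qs v l)) (\<lambda>v l j. ?S (e0 Q Cs Bs qs v l) (e2 v j)) (repc Q ?d (mcoef Cs Bs N) (e0 Q Cs Bs qs))"
   and bci: "\<forall>v\<in>verts Q. inverse_mats (?d v) (\<lambda>i l. ?S (e2 v i) (e0 Q Cs Bs qs v l)) (\<lambda>l j. ?S (e0 Q Cs Bs qs v l) (e2 v j))"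
  proof -
    have ST: "\<forall>v\<in>verts Q. \<forall>b\<in>MB Q Cs Bs qs v. \<forall>b'\<in>MB Q Cs Bs qs v. (\<Sum>x\<in>MB Q Cs Bs qs v. ?S b x * ?S x b') = (if b = b' then 1 else 0)"
    proof (intro ballI)
      fix v b b' assume b: "b \<in> MB Q Cs Bs qs v" and b': "b' \<in> MB Q Cs Bs qs v"
      show "(\<Sum>x\<in>MB Q Cs Bs qs v. ?S b x * ?S x b') = (if b = b' then 1 else 0)"
        using sum_delta_l[OF fin b, of "\<lambda>x. ?S x b'"] by simp
    qed
    have c: "\<forall>a\<in>arrs Q. \<forall>b\<in>MB Q Cs Bs qs (tgt Q a). \<forall>b'\<in>MB Q Cs Bs qs (src Q a).
       mcoef Cs Bs N a b b' = (\<Sum>x\<in>MB Q Cs Bs qs (tgt Q a). \<Sum>x'\<in>MB Q Cs Bs qs (src Q a). ?S b x * mcoef Cs Bs N a x x' * ?S x' b')"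
    proof (intro ballI)
      fix a b b' assume b: "b \<in> MB Q Cs Bs qs (tgt Q a)" and b': "b' \<in> MB Q Cs Bs qs (src Q a)"
      have "(\<Sum>x\<in>MB Q Cs Bs qs (tgt Q a). \<Sum>x'\<in>MB Q Cs Bs qs (src Q a). ?S b x * mcoef Cs Bs N a x x' * ?S x' b')
          = (\<Sum>x\<in>MB Q Cs Bs qs (tgt Q a). ?S b x * mcoef Cs Bs N a x b')"
        by (intro sum.cong refl) (simp add: sum_delta_r[OF fin b'] mult.assoc flip: sum_distrib_left)
      also have "\<dots> = mcoef Cs Bs N a b b'" by (rule sum_delta_l[OF fin b])
      finally show "mcoef Cs Bs N a b b' = (\<Sum>x\<in>MB Q Cs Bs qs (tgt Q a). \<Sum>x'\<in>MB Q Cs Bs qs (src Q a). ?S b x * mcoef Cs Bs N a x x' * ?S x' b')" by simp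
    qed
    have e0b: "\<forall>v\<in>verts Q. bij_betw (e0 Q Cs Bs qs v) {..<?d v} (MB Q Cs Bs qs v)" by (simp add: e0_bij)
    note B = base_change[OF ends e0b e2b ST ST c]
    show "repc Q ?d (mcoef Cs Bs N) e2 = gl_act Q ?d (\<lambda>v i l. ?S (e2 v i) (e0 Q Cs Bs qs v l)) (\<lambda>v l j. ?S (e0 Q Cs Bs qs v l) (e2 v j)) (repc Q ?d (mcoef Cs Bs N) (e0 Q Cs Bs qs))"
      by (rule B(1))
    show "\<forall>v\<in>verts Q. inverse_mats (?d v) (\<lambda>i l. ?S (e2 v i) (e0 Q Cs Bs qs v l)) (\<lambda>l j. ?S (e0 Q Cs Bs qs v l) (e2 v j))"
      by (rule B(2))
  qed
  have tr: "trinv qs N" unfolding N_def by (rule bd_trinv[OF lp lq adm])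
  have "x = gl_act Q ?d (\<lambda>v. mm (?d v) (g v) (\<lambda>i l. ?S (e2 v i) (e0 Q Cs Bs qs v l)))
            (\<lambda>v. mm (?d v) (\<lambda>l j. ?S (e0 Q Cs Bs qs v l) (e2 v j)) (h v)) (repc Q ?d (mcoef Cs Bs N) (e0 Q Cs Bs qs))"
    unfolding x r1 bc gl_act_comp ..
  moreover have "\<forall>v\<in>verts Q. inverse_mats (?d v) (mm (?d v) (g v) (\<lambda>i l. ?S (e2 v i) (e0 Q Cs Bs qs v l)))
            (mm (?d v) (\<lambda>l j. ?S (e0 Q Cs Bs qs v l) (e2 v j)) (h v))"
    using gh bci inverse_mats_comp by blast
  ultimately show "x \<in> MS Q Cs Bs qs" unfolding MS_def using tr by blast
qed

lemma jm_bd: "i < sum_list (map fst ns) \<Longrightarrow> i' < sum_list (map fst ns) \<Longrightarrow>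
  jordan_matrix ns $$ (i,i') = bd (map (\<lambda>(n,a). (a,n)) ns) i i'"
proof (induction ns arbitrary: i i')
  case Nil then show ?case by simp
next
  case (Cons na ns)
  obtain n a where na: "na = (n,a)" by force
  let ?s = "sum_list (map fst ns)"
  have dims: "dim_row (jordan_block n a) = n" "dim_col (jordan_block n a) = n"
    "dim_row (jordan_matrix ns) = ?s" "dim_col (jordan_matrix ns) = ?s" by auto
  have ii: "i < n + ?s" "i' < n + ?s" using Cons.prems na by auto
  have "jordan_matrix (na # ns) $$ (i,i') = (if i < n then if i' < n then jordan_block n a $$ (i,i') else 0
      else if i' < n then 0 else jordan_matrix ns $$ (i - n, i' - n))"
    unfolding na jordan_matrix_Cons using ii by (simp add: dims)
  also have "\<dots> = bd (map (\<lambda>(n,a). (a,n)) (na # ns)) i i'"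
    using Cons.IH[of "i - n" "i' - n"] ii na by (auto simp: jordan_def)
  finally show ?case .
qed

lemma Mt_of_carrier: "P \<in> carrier_mat n n \<Longrightarrow> Mt n (\<lambda>i j. P $$ (i,j)) = P"
  by (intro eq_matI) auto

lemma jnf_decomp:
  fixes Nf :: "nat \<Rightarrow> nat \<Rightarrow> 'k::field"
  assumes tri: "\<forall>i<n. Nf i i \<noteq> 0 \<and> (\<forall>i'<i. Nf i i' = 0)"
  shows "\<exists>ps Pf Qf. sum_list (map snd ps) = n \<and> (\<forall>(lam,q)\<in>set ps. lam \<noteq> 0 \<and> q \<ge> 1) \<and> inverse_mats n Pf Qf \<and>
     (\<forall>c<n. \<forall>c'<n. Nf c c' = (\<Sum>c1<n. \<Sum>c2<n. Pf c c1 * bd ps c1 c2 * Qf c2 c'))"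
proof -
  define A where "A = Mt n Nf"
  have Ac: "A \<in> carrier_mat n n" unfolding A_def by simp
  have ut: "upper_triangular A" unfolding A_def upper_triangular_def using tri by auto
  define ns where "ns = triangular_to_jnf_vector A"
  have jnf: "jordan_nf A ns" unfolding ns_def by (rule triangular_to_jnf_vector[OF Ac ut])
  define J where "J = jordan_matrix ns"
  have n0: "0 \<notin> fst ` set ns" and sim: "similar_mat A J" using jnf unfolding jordan_nf_def J_def by auto
  from similar_matD[OF sim] obtain m P Q where c: "{A, J, P, Q} \<subseteq> carrier_mat m m"
    and PQ: "P * Q = 1\<^sub>m m" "Q * P = 1\<^sub>m m" and APJQ: "A = P * J * Q" by blast
  have mn: "m = n" using c Ac by auto
  have Jc: "J \<in> carrier_mat n n" and Pc: "P \<in> carrier_mat n n" and Qc: "Q \<in> carrier_mat n n" using c mn by auto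
  have sn: "sum_list (map fst ns) = n" using carrier_matD(1)[OF Jc] unfolding J_def jordan_matrix_dim(1) by this
  define ps where "ps = map (\<lambda>(n,a). (a,n)) ns"
  have sps: "map snd ps = map fst ns" unfolding ps_def by (induction ns) auto
  define Pf where "Pf = (\<lambda>i j. P $$ (i,j))"
  define Qf where "Qf = (\<lambda>i j. Q $$ (i,j))"
  define Jf where "Jf = (\<lambda>i j. J $$ (i,j))"
  have MP: "Mt n Pf = P" "Mt n Qf = Q" "Mt n Jf = J" unfolding Pf_def Qf_def Jf_def
    using Mt_of_carrier Pc Qc Jc by auto
  have inv: "inverse_mats n Pf Qf" unfolding inverse_mats_iff MP using PQ mn by simp
  have Jbd: "Jf c1 c2 = bd ps c1 c2" if "c1 < n" "c2 < n" for c1 c2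
    unfolding Jf_def J_def ps_def using jm_bd[of c1 ns c2] that sn by simp
  have ent: "Nf c c' = (\<Sum>c1<n. \<Sum>c2<n. Pf c c1 * bd ps c1 c2 * Qf c2 c')" if cc: "c < n" "c' < n" for c c'
  proof -
    have "A = Mt n (mm n (mm n Pf Jf) Qf)" unfolding APJQ by (simp add: MP[symmetric] Mt_mult)
    then have "Nf c c' = mm n (mm n Pf Jf) Qf c c'" using cc unfolding A_def by (metis Mt_index)
    also have "\<dots> = (\<Sum>c2<n. \<Sum>c1<n. Pf c c1 * Jf c1 c2 * Qf c2 c')"
      by (simp add: mm_def sum_distrib_right)
    also have "\<dots> = (\<Sum>c1<n. \<Sum>c2<n. Pf c c1 * Jf c1 c2 * Qf c2 c')" by (rule sum.swap)
    also have "\<dots> = (\<Sum>c1<n. \<Sum>c2<n. Pf c c1 * bd ps c1 c2 * Qf c2 c')"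
      by (intro sum.cong refl) (simp add: Jbd)
    finally show ?thesis .
  qed
  have detA: "det A \<noteq> 0"
  proof -
    have "det A = prod_list (diag_mat A)" by (rule det_upper_triangular[OF ut Ac])
    moreover have "0 \<notin> set (diag_mat A)" using tri Ac unfolding diag_mat_def A_def by auto
    ultimately show ?thesis by (simp add: prod_list_zero_iff)
  qed
  have detJ: "det J = det A" using det_similar[OF sim] by simp
  have utJ: "upper_triangular J" unfolding upper_triangular_def J_def
    using jordan_matrix_upper_triangular[of _ ns] by simp
  have s1: "sum_list (map snd ps) = n" using sps sn by simp
  have lam: "lam \<noteq> 0 \<and> q \<ge> 1" if lq: "(lam, q) \<in> set ps" for lam q
  proof
    obtain r where r: "r < length ps" "ps ! r = (lam, q)" using lq by (metis in_set_conv_nth)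
    have nsr: "ns ! r = (q, lam)" using r unfolding ps_def by (auto simp: case_prod_beta)
    have rn: "r < length ns" using r unfolding ps_def by simp
    have qin: "(q, lam) \<in> set ns" using nth_mem[OF rn] nsr by simp
    show "q \<ge> 1"
    proof (rule ccontr)
      assume "\<not> q \<ge> 1"
      then have "q = 0" by simp
      then have "0 \<in> fst ` set ns" using qin by force
      then show False using n0 by simp
    qed
    then have r0: "0 < snd (ps ! r)" using r by simp
    let ?i = "offs (map snd ps) r + 0"
    have "?i < sum_list (map snd ps)" using offs_bound[of r "map snd ps" 0] r r0 by simp
    then have ilt: "?i < n" using s1 by simp
    have "bd ps ?i ?i = jordan (fst (ps ! r)) 0 0" using bd_offs[OF r(1) r(1) r0 r0] by simp
    then have Jii: "J $$ (?i, ?i) = lam" using Jbd[OF ilt ilt] r unfolding Jf_def by (simp add: jordan_def)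
    show "lam \<noteq> 0"
    proof
      assume "lam = 0"
      then have "0 \<in> set (diag_mat J)" using Jii ilt Jc unfolding diag_mat_def by force
      then have "det J = 0" using det_upper_triangular[OF utJ Jc] by (simp add: prod_list_zero_iff)
      then show False using detJ detA by simp
    qed
  qed
  have s2: "\<forall>(lam,q)\<in>set ps. lam \<noteq> 0 \<and> q \<ge> 1" using lam by blast
  show ?thesis
    by (rule exI[of _ ps], rule exI[of _ Pf], rule exI[of _ Qf], intro conjI s1 s2 inv allI impI ent)
qed


lemma bandcoef_conj:
  fixes P Qm M M' :: "nat \<Rightarrow> nat \<Rightarrow> 'k::field"
  assumes cc: "c < q" "c' < q" and inv: "inverse_mats q P Qm"
    and M': "M' c c' = (\<Sum>c1<q. \<Sum>c2<q. P c c1 * M c1 c2 * Qm c2 c')"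
  shows "(\<Sum>c1<q. P c c1 * (\<Sum>c2<q. bandcoef B M a p c1 p' c2 * Qm c2 c')) = bandcoef B M' a p c p' c'"
proof -
  let ?m = "length (snd B)"
  define cond where "cond i \<longleftrightarrow> (snd B ! i = Dir a \<and> p' = i \<and> p = Suc i mod ?m) \<or>
        (snd B ! i = Inv a \<and> p' = Suc i mod ?m \<and> p = i)" for i
  define T where "T i c1 c2 = (if cond i then (if i = 0 then M c1 c2 else (if c1 = c2 then 1 else 0)) else (0::'k))" for i c1 c2
  have bc: "bandcoef B X a p x p' y = (\<Sum>i<?m. if cond i then (if i = 0 then X x y else (if x = y then 1 else 0)) else 0)"
    for X x y unfolding bandcoef_def cond_def by simp
  have "(\<Sum>c1<q. P c c1 * (\<Sum>c2<q. bandcoef B M a p c1 p' c2 * Qm c2 c'))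
      = (\<Sum>c1<q. \<Sum>c2<q. \<Sum>i<?m. P c c1 * T i c1 c2 * Qm c2 c')"
    unfolding bc T_def by (simp add: sum_distrib_left sum_distrib_right mult.assoc)
  also have "\<dots> = (\<Sum>c1<q. \<Sum>i<?m. \<Sum>c2<q. P c c1 * T i c1 c2 * Qm c2 c')"
    by (rule sum.cong[OF refl], rule sum.swap)
  also have "\<dots> = (\<Sum>i<?m. \<Sum>c1<q. \<Sum>c2<q. P c c1 * T i c1 c2 * Qm c2 c')"
    by (rule sum.swap)
  also have "\<dots> = (\<Sum>i<?m. if cond i then (if i = 0 then M' c c' else (if c = c' then 1 else 0)) else 0)"
  proof (rule sum.cong[OF refl])
    fix i
    show "(\<Sum>c1<q. \<Sum>c2<q. P c c1 * T i c1 c2 * Qm c2 c') = (if cond i then (if i = 0 then M' c c' else (if c = c' then 1 else 0)) else 0)"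
    proof (cases "cond i")
      case False then show ?thesis by (simp add: T_def)
    next
      case True
      show ?thesis
      proof (cases "i = 0")
        case True then show ?thesis using \<open>cond i\<close> M' by (simp add: T_def)
      next
        case False
        have "(\<Sum>c1<q. \<Sum>c2<q. P c c1 * T i c1 c2 * Qm c2 c') = (\<Sum>c1<q. P c c1 * Qm c1 c')"
        proof (rule sum.cong[OF refl])
          fix c1 assume "c1 \<in> {..<q}"
          have "(\<Sum>c2<q. P c c1 * T i c1 c2 * Qm c2 c') = (\<Sum>c2<q. if c1 = c2 then P c c1 * Qm c2 c' else 0)"
            using \<open>cond i\<close> False by (intro sum.cong) (auto simp: T_def)
          also have "\<dots> = P c c1 * Qm c1 c'" using \<open>c1 \<in> {..<q}\<close> by simp
          finally show "(\<Sum>c2<q. P c c1 * T i c1 c2 * Qm c2 c') = P c c1 * Qm c1 c'" .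
        qed
        also have "\<dots> = (if c = c' then 1 else 0)" using inv cc unfolding inverse_mats_def by blast
        finally show ?thesis using \<open>cond i\<close> False by simp
      qed
    qed
  qed
  also have "\<dots> = bandcoef B M' a p c p' c'" unfolding bc ..
  finally show ?thesis .
qed


definition blk :: "('v,'a) walk list \<Rightarrow> (nat \<Rightarrow> nat \<Rightarrow> nat \<Rightarrow> 'k::field) \<Rightarrow> nat \<times> nat \<times> nat \<Rightarrow> nat \<times> nat \<times> nat \<Rightarrow> 'k" where
  "blk Cs PP b b' = (case (b,b') of ((k,p,c),(k',p',c')) \<Rightarrow> if k = k' \<and> p = p' then
     (if length Cs \<le> k then PP (k - length Cs) c c' else (if c = c' then 1 else 0)) else 0)"

lemma MB_fiber:
  assumes b: "(k,p,c) \<in> MB Q Cs Bs qs v"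
  shows "{x \<in> MB Q Cs Bs qs v. fst x = k \<and> fst (snd x) = p} =
     (if k < length Cs then {(k,p,c)} else (\<lambda>c''. (k,p,c'')) ` {..<qs!(k - length Cs)})"
proof (cases "k < length Cs")
  case True
  then have "c = 0" using b by (auto simp: MB_def mbasis_def)
  then show ?thesis using True b by (auto simp: MB_def mbasis_def mvert_def)
next
  case False
  then show ?thesis using b by (auto simp: MB_def mbasis_def mvert_def)
qed

lemma blk_collapse_l:
  assumes b: "(k,p,c) \<in> MB Q Cs Bs qs v"
  shows "(\<Sum>x\<in>MB Q Cs Bs qs v. blk Cs PP (k,p,c) x * F x) =
    (if k < length Cs then F (k,p,c) else (\<Sum>c''<qs!(k - length Cs). PP (k - length Cs) c c'' * F (k,p,c'')))"
proof -
  have fin: "finite (MB Q Cs Bs qs v)" using MB_card[of Q Cs Bs qs v] by blast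
  let ?X = "{x \<in> MB Q Cs Bs qs v. fst x = k \<and> fst (snd x) = p}"
  have "(\<Sum>x\<in>MB Q Cs Bs qs v. blk Cs PP (k,p,c) x * F x) = (\<Sum>x\<in>?X. blk Cs PP (k,p,c) x * F x)"
    by (rule sum.mono_neutral_right) (use fin in \<open>auto simp: blk_def split: prod.splits\<close>)
  also have "\<dots> = (if k < length Cs then F (k,p,c) else (\<Sum>c''<qs!(k - length Cs). PP (k - length Cs) c c'' * F (k,p,c'')))"
  proof (cases "k < length Cs")
    case True then show ?thesis unfolding MB_fiber[OF b] by (simp add: blk_def)
  next
    case False
    have "(\<Sum>x\<in>(\<lambda>c''. (k,p,c'')) ` {..<qs!(k - length Cs)}. blk Cs PP (k,p,c) x * F x)
        = (\<Sum>c''<qs!(k - length Cs). blk Cs PP (k,p,c) (k,p,c'') * F (k,p,c''))"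
      by (rule sum.reindex_cong[where l = "\<lambda>c''. (k,p,c'')"]) (auto simp: inj_on_def)
    then show ?thesis unfolding MB_fiber[OF b] using False by (simp add: blk_def)
  qed
  finally show ?thesis .
qed

lemma blk_collapse_r:
  assumes b: "(k,p,c) \<in> MB Q Cs Bs qs v"
  shows "(\<Sum>x\<in>MB Q Cs Bs qs v. F x * blk Cs PP x (k,p,c)) =
    (if k < length Cs then F (k,p,c) else (\<Sum>c''<qs!(k - length Cs). F (k,p,c'') * PP (k - length Cs) c'' c))"
proof -
  have fin: "finite (MB Q Cs Bs qs v)" using MB_card[of Q Cs Bs qs v] by blast
  let ?X = "{x \<in> MB Q Cs Bs qs v. fst x = k \<and> fst (snd x) = p}"
  have "(\<Sum>x\<in>MB Q Cs Bs qs v. F x * blk Cs PP x (k,p,c)) = (\<Sum>x\<in>?X. F x * blk Cs PP x (k,p,c))"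
    by (rule sum.mono_neutral_right) (use fin in \<open>auto simp: blk_def split: prod.splits\<close>)
  also have "\<dots> = (if k < length Cs then F (k,p,c) else (\<Sum>c''<qs!(k - length Cs). F (k,p,c'') * PP (k - length Cs) c'' c))"
  proof (cases "k < length Cs")
    case True then show ?thesis unfolding MB_fiber[OF b] by (simp add: blk_def)
  next
    case False
    have "(\<Sum>x\<in>(\<lambda>c''. (k,p,c'')) ` {..<qs!(k - length Cs)}. F x * blk Cs PP x (k,p,c))
        = (\<Sum>c''<qs!(k - length Cs). F (k,p,c'') * blk Cs PP (k,p,c'') (k,p,c))"
      by (rule sum.reindex_cong[where l = "\<lambda>c''. (k,p,c'')"]) (auto simp: inj_on_def)
    then show ?thesis unfolding MB_fiber[OF b] using False by (simp add: blk_def)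
  qed
  finally show ?thesis .
qed


lemma MB_band_facts:
  assumes "(k,p,c) \<in> MB Q Cs Bs qs v" "\<not> k < length Cs"
  shows "k - length Cs < length Bs" "c < qs ! (k - length Cs)" "p < length (snd (Bs ! (k - length Cs)))"
  using assms by (auto simp: MB_def mbasis_def)

lemma MB_str_facts:
  assumes "(k,p,c) \<in> MB Q Cs Bs qs v" "k < length Cs"
  shows "c = 0"
  using assms by (auto simp: MB_def mbasis_def)

lemma inverse_mats_apply:
  assumes "inverse_mats n g h" "i < n" "j < n"
  shows "(\<Sum>l<n. g i l * h l j) = (if i = j then 1 else 0)" "(\<Sum>l<n. h i l * g l j) = (if i = j then 1 else 0)"
  using assms unfolding inverse_mats_def by auto

lemma blk_inv:
  assumes inv: "\<forall>j<length Bs. inverse_mats (qs!j) (PP j) (QQ j)"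
    and b: "b \<in> MB Q Cs Bs qs v" and b': "b' \<in> MB Q Cs Bs qs v"
  shows "(\<Sum>x\<in>MB Q Cs Bs qs v. blk Cs PP b x * blk Cs QQ x b') = (if b = b' then 1 else 0)"
proof -
  obtain k p c where kb: "b = (k,p,c)" by (cases b)
  obtain k' p' c' where kb': "b' = (k',p',c')" by (cases b')
  have bb: "(k,p,c) \<in> MB Q Cs Bs qs v" and bb': "(k',p',c') \<in> MB Q Cs Bs qs v" using b b' kb kb' by auto
  show ?thesis unfolding kb kb' blk_collapse_l[OF bb]
  proof (cases "k < length Cs")
    case True
    then show "(if k < length Cs then blk Cs QQ (k, p, c) (k', p', c')
          else \<Sum>c''<qs ! (k - length Cs). PP (k - length Cs) c c'' * blk Cs QQ (k, p, c'') (k', p', c')) =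
          (if (k, p, c) = (k', p', c') then 1 else 0)"
      by (auto simp: blk_def)
  next
    case False
    note F = MB_band_facts[OF bb False]
    show "(if k < length Cs then blk Cs QQ (k, p, c) (k', p', c')
          else \<Sum>c''<qs ! (k - length Cs). PP (k - length Cs) c c'' * blk Cs QQ (k, p, c'') (k', p', c')) =
          (if (k, p, c) = (k', p', c') then 1 else 0)"
    proof (cases "k = k' \<and> p = p'")
      case False then show ?thesis using \<open>\<not> k < length Cs\<close> by (auto simp: blk_def)
    next
      case True
      then have c': "c' < qs ! (k - length Cs)" using MB_band_facts[OF bb'] \<open>\<not> k < length Cs\<close> by auto
      have "(\<Sum>c''<qs ! (k - length Cs). PP (k - length Cs) c c'' * blk Cs QQ (k, p, c'') (k', p', c'))
          = (\<Sum>c''<qs ! (k - length Cs). PP (k - length Cs) c c'' * QQ (k - length Cs) c'' c')"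
        using True \<open>\<not> k < length Cs\<close> by (intro sum.cong) (auto simp: blk_def)
      also have "\<dots> = (if c = c' then 1 else 0)"
        by (rule inverse_mats_apply(1)) (use inv F c' in simp_all)
      finally show ?thesis using True \<open>\<not> k < length Cs\<close> by simp
    qed
  qed
qed

lemma blk_inv':
  assumes inv: "\<forall>j<length Bs. inverse_mats (qs!j) (PP j) (QQ j)"
    and b: "b \<in> MB Q Cs Bs qs v" and b': "b' \<in> MB Q Cs Bs qs v"
  shows "(\<Sum>x\<in>MB Q Cs Bs qs v. blk Cs QQ b x * blk Cs PP x b') = (if b = b' then 1 else 0)"
proof -
  have "\<forall>j<length Bs. inverse_mats (qs!j) (QQ j) (PP j)" using inv unfolding inverse_mats_def by simp
  from blk_inv[OF this b b'] show ?thesis .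
qed

lemma blk_coef:
  assumes inv: "\<forall>j<length Bs. inverse_mats (qs!j) (PP j) (QQ j)"
    and NJ: "\<forall>j<length Bs. \<forall>c<qs!j. \<forall>c'<qs!j. N j c c' = (\<Sum>c1<qs!j. \<Sum>c2<qs!j. PP j c c1 * J j c1 c2 * QQ j c2 c')"
    and b: "b \<in> MB Q Cs Bs qs v" and b': "b' \<in> MB Q Cs Bs qs w"
  shows "mcoef Cs Bs N a b b' = (\<Sum>x\<in>MB Q Cs Bs qs v. \<Sum>x'\<in>MB Q Cs Bs qs w. blk Cs PP b x * mcoef Cs Bs J a x x' * blk Cs QQ x' b')"
proof -
  obtain k p c where kb: "b = (k,p,c)" by (cases b)
  obtain k' p' c' where kb': "b' = (k',p',c')" by (cases b')
  have bb: "(k,p,c) \<in> MB Q Cs Bs qs v" and bb': "(k',p',c') \<in> MB Q Cs Bs qs w" using b b' kb kb' by auto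
  define H where "H x = (if k' < length Cs then mcoef Cs Bs J a x (k',p',c')
      else (\<Sum>c2<qs!(k' - length Cs). mcoef Cs Bs J a x (k',p',c2) * QQ (k' - length Cs) c2 c'))" for x
  have "(\<Sum>x\<in>MB Q Cs Bs qs v. \<Sum>x'\<in>MB Q Cs Bs qs w. blk Cs PP b x * mcoef Cs Bs J a x x' * blk Cs QQ x' b')
     = (\<Sum>x\<in>MB Q Cs Bs qs v. blk Cs PP (k,p,c) x * (\<Sum>x'\<in>MB Q Cs Bs qs w. mcoef Cs Bs J a x x' * blk Cs QQ x' (k',p',c')))"
    unfolding kb kb' by (simp add: sum_distrib_left mult.assoc)
  also have "\<dots> = (\<Sum>x\<in>MB Q Cs Bs qs v. blk Cs PP (k,p,c) x * H x)"
    unfolding H_def blk_collapse_r[OF bb'] ..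
  also have "\<dots> = (if k < length Cs then H (k,p,c) else (\<Sum>c1<qs!(k - length Cs). PP (k - length Cs) c c1 * H (k,p,c1)))"
    by (rule blk_collapse_l[OF bb])
  also have "\<dots> = mcoef Cs Bs N a b b'"
  proof (cases "k = k'")
    case False
    then have "H (k,p,x) = 0" for x unfolding H_def by (simp add: mcoef_def)
    then show ?thesis using False kb kb' by (simp add: mcoef_def)
  next
    case True
    note kk = True
    show ?thesis
    proof (cases "k < length Cs")
      case True then show ?thesis using kk kb kb' by (simp add: H_def mcoef_def)
    next
      case False
      let ?j = "k - length Cs"
      note F = MB_band_facts[OF bb False]
      have c': "c' < qs ! ?j" using MB_band_facts[OF bb'] kk False by auto
      have Hk: "H (k,p,c1) = (\<Sum>c2<qs!?j. bandcoef (Bs!?j) (J ?j) a p c1 p' c2 * QQ ?j c2 c')" for c1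
        unfolding H_def using kk False by (simp add: mcoef_def)
      have "(\<Sum>c1<qs!?j. PP ?j c c1 * H (k,p,c1)) = bandcoef (Bs!?j) (N ?j) a p c p' c'"
      proof -
        have invj: "inverse_mats (qs!?j) (PP ?j) (QQ ?j)" using inv F(1) by simp
        have NJj: "N ?j c c' = (\<Sum>c1<qs!?j. \<Sum>c2<qs!?j. PP ?j c c1 * J ?j c1 c2 * QQ ?j c2 c')"
          by (rule NJ[rule_format]) (use F c' in auto)
        show ?thesis unfolding Hk by (rule bandcoef_conj[where M' = "N ?j" and M = "J ?j", OF F(2) c' invj NJj])
      qed
      then show ?thesis using False kk kb kb' by (simp add: mcoef_def)
    qed
  qed
  finally show ?thesis by simp
qed

lemma MS_sub_famO:
  assumes G: "gentle Q" and lq: "length qs = length Bs"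
  shows "MS Q Cs Bs qs \<subseteq> (famO Q Cs Bs qs :: ('a,'k::field) point set)"
proof
  fix x :: "('a,'k) point" assume "x \<in> MS Q Cs Bs qs"
  let ?d = "dimD Q Cs Bs qs"
  let ?e0 = "e0 Q Cs Bs qs"
  obtain g h N where gh: "\<forall>v\<in>verts Q. inverse_mats (?d v) (g v) (h v)" and tr: "trinv qs N"
    and x: "x = gl_act Q ?d g h (repc Q ?d (mcoef Cs Bs N) ?e0)"
    using \<open>x \<in> MS Q Cs Bs qs\<close> unfolding MS_def by blast
  define R where "R j t \<longleftrightarrow> (case t of (ps,Pf,Qf) \<Rightarrow> sum_list (map snd ps) = qs!j \<and>
      (\<forall>(lam,q)\<in>set ps. lam \<noteq> 0 \<and> q \<ge> 1) \<and> inverse_mats (qs!j) Pf Qf \<and>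
      (\<forall>c<qs!j. \<forall>c'<qs!j. N j c c' = (\<Sum>c1<qs!j. \<Sum>c2<qs!j. Pf c c1 * bd ps c1 c2 * Qf c2 c')))"
    for j and t :: "('k \<times> nat) list \<times> (nat \<Rightarrow> nat \<Rightarrow> 'k) \<times> (nat \<Rightarrow> nat \<Rightarrow> 'k)"
  have "\<forall>j\<in>{..<length Bs}. \<exists>t. R j t"
  proof
    fix j assume "j \<in> {..<length Bs}"
    then have "j < length qs" using lq by simp
    then have "\<forall>i<qs!j. N j i i \<noteq> 0 \<and> (\<forall>i'<i. N j i i' = 0)" using tr unfolding trinv_def by blast
    from jnf_decomp[OF this] obtain ps Pf Qf where "sum_list (map snd ps) = qs!j"
      "(\<forall>(lam,q)\<in>set ps. lam \<noteq> 0 \<and> q \<ge> 1)" "inverse_mats (qs!j) Pf Qf"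
      "(\<forall>c<qs!j. \<forall>c'<qs!j. N j c c' = (\<Sum>c1<qs!j. \<Sum>c2<qs!j. Pf c c1 * bd ps c1 c2 * Qf c2 c'))"
      by blast
    then have "R j (ps, Pf, Qf)" unfolding R_def by simp
    then show "\<exists>t. R j t" by blast
  qed
  then obtain f where f: "\<forall>j\<in>{..<length Bs}. R j (f j)" using bchoice by blast
  define PS where "PS j = fst (f j)" for j
  define PP where "PP j = fst (snd (f j))" for j
  define QQ where "QQ j = snd (snd (f j))" for j
  have fR: "R j (PS j, PP j, QQ j)" if "j < length Bs" for j
    using f that unfolding PS_def PP_def QQ_def by simp
  define parts where "parts = map PS [0..<length Bs]"
  have lp: "length parts = length Bs" unfolding parts_def by simp
  have pj: "parts ! j = PS j" if "j < length Bs" for j unfolding parts_def using that by simp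
  have adm: "\<forall>j<length Bs. (\<forall>(lam,q)\<in>set (parts ! j). lam \<noteq> 0 \<and> q \<ge> 1) \<and> sum_list (map snd (parts ! j)) = qs ! j"
    using fR pj unfolding R_def by auto
  have sums: "\<forall>j<length Bs. sum_list (map snd (parts!j)) = qs!j" using adm by blast
  have inv: "\<forall>j<length Bs. inverse_mats (qs!j) (PP j) (QQ j)" using fR unfolding R_def by auto
  have NJ: "\<forall>j<length Bs. \<forall>c<qs!j. \<forall>c'<qs!j. N j c c' = (\<Sum>c1<qs!j. \<Sum>c2<qs!j. PP j c c1 * bd (parts!j) c1 c2 * QQ j c2 c')"
    using fR pj unfolding R_def by auto
  let ?Jb = "\<lambda>j. bd (parts!j)"
  have ends: "\<forall>a\<in>arrs Q. src Q a \<in> verts Q \<and> tgt Q a \<in> verts Q" using gentle_ends[OF G] .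
  have e0b: "\<forall>v\<in>verts Q. bij_betw (?e0 v) {..<?d v} (MB Q Cs Bs qs v)" by (simp add: e0_bij)
  have ST: "\<forall>v\<in>verts Q. \<forall>b\<in>MB Q Cs Bs qs v. \<forall>b'\<in>MB Q Cs Bs qs v.
      (\<Sum>x\<in>MB Q Cs Bs qs v. blk Cs PP b x * blk Cs QQ x b') = (if b = b' then 1 else 0)"
    using blk_inv[OF inv] by blast
  have TS: "\<forall>v\<in>verts Q. \<forall>b\<in>MB Q Cs Bs qs v. \<forall>b'\<in>MB Q Cs Bs qs v.
      (\<Sum>x\<in>MB Q Cs Bs qs v. blk Cs QQ b x * blk Cs PP x b') = (if b = b' then 1 else 0)"
    using blk_inv'[OF inv] by blast
  have cc: "\<forall>a\<in>arrs Q. \<forall>b\<in>MB Q Cs Bs qs (tgt Q a). \<forall>b'\<in>MB Q Cs Bs qs (src Q a).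
      mcoef Cs Bs N a b b' = (\<Sum>x\<in>MB Q Cs Bs qs (tgt Q a). \<Sum>x'\<in>MB Q Cs Bs qs (src Q a).
         blk Cs PP b x * mcoef Cs Bs ?Jb a x x' * blk Cs QQ x' b')"
    using blk_coef[OF inv NJ] by blast
  note BC = base_change[OF ends e0b e0b ST TS cc]
  define S' where "S' = (\<lambda>v i l. blk Cs PP (?e0 v i) (?e0 v l))"
  define T' where "T' = (\<lambda>v l j. blk Cs QQ (?e0 v l) (?e0 v j))"
  have r1: "repc Q ?d (mcoef Cs Bs N) ?e0 = gl_act Q ?d S' T' (repc Q ?d (mcoef Cs Bs ?Jb) ?e0)"
    unfolding S'_def T'_def by (rule BC(1))
  have ST': "\<forall>v\<in>verts Q. inverse_mats (?d v) (S' v) (T' v)" unfolding S'_def T'_def by (rule BC(2))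
  define CB where "CB v = {b \<in> basis (comps Cs Bs parts). bvert Q (comps Cs Bs parts) b = v}" for v
  have sb: "bij_betw (sig Cs Bs parts) (CB v) (MB Q Cs Bs qs v)" for v
    unfolding CB_def by (rule sig_bij[OF lp sums])
  define e' where "e' v i = inv_into (CB v) (sig Cs Bs parts) (?e0 v i)" for v i
  have e'b: "\<forall>v\<in>verts Q. bij_betw (e' v) {..<?d v} (CB v)"
  proof
    fix v assume "v \<in> verts Q"
    have "bij_betw (inv_into (CB v) (sig Cs Bs parts) \<circ> ?e0 v) {..<?d v} (CB v)"
      by (rule bij_betw_trans[OF e0_bij bij_betw_inv_into[OF sb]])
    then show "bij_betw (e' v) {..<?d v} (CB v)" unfolding e'_def comp_def by simp
  qed
  have se: "sig Cs Bs parts (e' v i) = ?e0 v i" "e' v i \<in> CB v" if "i < ?d v" for v i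
  proof -
    have "?e0 v i \<in> MB Q Cs Bs qs v" using e0_bij[of Q Cs Bs qs v] that by (auto dest: bij_betwE)
    then show "sig Cs Bs parts (e' v i) = ?e0 v i" "e' v i \<in> CB v"
      unfolding e'_def using sb[of v]
      by (auto simp: bij_betw_def f_inv_into_f inv_into_into)
  qed
  have r2: "repc Q ?d (mcoef Cs Bs ?Jb) ?e0 = rep_point Q ?d (comps Cs Bs parts) e'"
    unfolding rep_point_repc
  proof (intro ext)
    fix a i j
    show "repc Q ?d (mcoef Cs Bs ?Jb) ?e0 a i j = repc Q ?d (coef (comps Cs Bs parts)) e' a i j"
    proof (cases "a \<in> arrs Q \<and> i < ?d (tgt Q a) \<and> j < ?d (src Q a)")
      case False then show ?thesis by (auto simp: repc_def)
    next
      case True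
      have bi: "e' (tgt Q a) i \<in> basis (comps Cs Bs parts)" and bj: "e' (src Q a) j \<in> basis (comps Cs Bs parts)"
        using se(2)[of i "tgt Q a"] se(2)[of j "src Q a"] True unfolding CB_def by auto
      show ?thesis using True sig_coef[OF lp bi bj, of a] se(1)[of i "tgt Q a"] se(1)[of j "src Q a"]
        by (simp add: repc_def)
    qed
  qed
  have "x = gl_act Q ?d (\<lambda>v. mm (?d v) (g v) (S' v)) (\<lambda>v. mm (?d v) (T' v) (h v)) (rep_point Q ?d (comps Cs Bs parts) e')"
    unfolding x r1 r2 gl_act_comp ..
  moreover have "\<forall>v\<in>verts Q. inverse_mats (?d v) (mm (?d v) (g v) (S' v)) (mm (?d v) (T' v) (h v))"
    using gh ST' inverse_mats_comp by blast
  ultimately have xo: "x \<in> gl_orbit Q ?d (rep_point Q ?d (comps Cs Bs parts) e')"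
    unfolding gl_orbit_def by blast
  show "x \<in> famO Q Cs Bs qs"
    unfolding famO_def Let_def
    using xo lp adm e'b unfolding CB_def by blast
qed

lemma alg_closed_infinite:
  assumes "alg_closed TYPE('k::field)"
  shows "infinite (UNIV :: 'k set)"
proof
  assume fin: "finite (UNIV :: 'k set)"
  define P :: "'k poly" where "P = (\<Prod>a\<in>UNIV. [:- a, 1:])"
  have "degree P = (\<Sum>a\<in>(UNIV::'k set). degree [:- a, 1:])"
    unfolding P_def by (rule degree_prod_eq_sum_degree) auto
  also have "\<dots> = card (UNIV :: 'k set)" by simp
  finally have dP: "degree P = card (UNIV :: 'k set)" .
  have "card (UNIV :: 'k set) > 0" using fin by (simp add: card_gt_0_iff)
  then have dP0: "degree P > 0" using dP by simp
  have d1: "degree (1 + P) = degree P" by (rule degree_add_eq_right) (use dP0 in simp)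
  have "\<forall>p::'k poly. degree p > 0 \<longrightarrow> (\<exists>z. poly p z = 0)" using assms unfolding alg_closed_def by simp
  then have "\<exists>z. poly (1 + P) z = 0" using d1 dP0 by metis
  then obtain z where "poly (1 + P) z = 0" by blast
  moreover have "poly P z = 0" unfolding P_def poly_prod
    by (rule prod_zero) (use fin in \<open>auto intro!: bexI[of _ z]\<close>)
  ultimately show False by simp
qed

lemma PF_lin: "(\<lambda>t. (1 - t) * a + t * b) \<in> PF"
  by (intro PF_add PF_mult PF_minus PF_const PF_id)

lemma mcoef_PF:
  assumes "\<And>j c c'. (\<lambda>t. NN t j c c') \<in> PF"
  shows "(\<lambda>t. mcoef Cs Bs (NN t) a b b') \<in> PF"
proof -
  obtain k p c where b: "b = (k,p,c)" by (cases b)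
  obtain k' p' c' where b': "b' = (k',p',c')" by (cases b')
  have "(\<lambda>t. bandcoef (Bs ! (k - length Cs)) (NN t (k - length Cs)) a p c p' c') \<in> PF"
    unfolding bandcoef_def by (intro PF_sum PF_if PF_const assms)
  then show ?thesis unfolding b b' mcoef_def by (simp add: PF_if)
qed

lemma cofactor_PF:
  assumes "\<And>i j. i < n \<Longrightarrow> j < n \<Longrightarrow> (\<lambda>t. f t i j) \<in> PF" "l < n" "j < n"
  shows "(\<lambda>t. adj_mat (Mt n (f t)) $$ (l,j)) \<in> PF"
proof -
  have "(\<lambda>t. det (mat_delete (Mt n (f t)) j l)) \<in> PF"
  proof (rule PF_det[where n = "n - 1"])
    show "mat_delete (Mt n (f t)) j l \<in> carrier_mat (n - 1) (n - 1)" for t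
      by (rule mat_delete_carrier) simp
    fix i i' assume "i < n - 1" "i' < n - 1"
    then have "(if i < j then i else Suc i) < n" "(if i' < l then i' else Suc i') < n" by auto
    then show "(\<lambda>t. mat_delete (Mt n (f t)) j l $$ (i, i')) \<in> PF"
      using \<open>i < n - 1\<close> \<open>i' < n - 1\<close> assms(1) by (simp add: mat_delete_def)
  qed
  then have "(\<lambda>t. (-1)^(j+l) * det (mat_delete (Mt n (f t)) j l)) \<in> PF" by (intro PF_mult PF_const)
  then show ?thesis using assms(2,3) by (simp add: adj_mat_def cofactor_def)
qed


lemma gl_act_cong_verts:
  assumes ends: "\<forall>a\<in>arrs Q. src Q a \<in> verts Q \<and> tgt Q a \<in> verts Q"
    and "\<forall>v\<in>verts Q. \<forall>i<d v. \<forall>j<d v. h v i j = h' v i j"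
  shows "gl_act Q d g h y = gl_act Q d g h' y"
  unfolding gl_act_def
proof (intro ext)
  fix a i j
  show "(if a \<in> arrs Q \<and> i < d (tgt Q a) \<and> j < d (src Q a)
          then \<Sum>l<d (tgt Q a). \<Sum>l'<d (src Q a). g (tgt Q a) i l * y a l l' * h (src Q a) l' j else 0) =
        (if a \<in> arrs Q \<and> i < d (tgt Q a) \<and> j < d (src Q a)
          then \<Sum>l<d (tgt Q a). \<Sum>l'<d (src Q a). g (tgt Q a) i l * y a l l' * h' (src Q a) l' j else 0)"
    using assms by (auto intro!: sum.cong)
qed

lemma prod_nz: "finite A \<Longrightarrow> (\<And>x. x \<in> A \<Longrightarrow> f x \<noteq> (0::'k::field)) \<Longrightarrow> prod f A \<noteq> 0"
  by (simp add: prod_zero_iff)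

lemma line_lemma:
  assumes G: "gentle Q" and inf: "infinite (UNIV :: 'k::field set)"
    and x1: "x1 \<in> (MS Q Cs Bs qs :: ('a,'k) point set)" and x2: "x2 \<in> MS Q Cs Bs qs"
    and f1: "f1 \<in> polyfun" and f2: "f2 \<in> polyfun" and n1: "f1 x1 \<noteq> 0" and n2: "f2 x2 \<noteq> 0"
  shows "\<exists>x\<in>MS Q Cs Bs qs. f1 x \<noteq> 0 \<and> f2 x \<noteq> 0"
proof -
  let ?d = "dimD Q Cs Bs qs"
  let ?E = "e0 Q Cs Bs qs"
  have ends: "\<forall>a\<in>arrs Q. src Q a \<in> verts Q \<and> tgt Q a \<in> verts Q" using gentle_ends[OF G] .
  have fV: "finite (verts Q)" using G unfolding gentle_def by simp
  obtain g1 h1 N1 where gh1: "\<forall>v\<in>verts Q. inverse_mats (?d v) (g1 v) (h1 v)" and tr1: "trinv qs N1"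
    and x1e: "x1 = gl_act Q ?d g1 h1 (repc Q ?d (mcoef Cs Bs N1) ?E)"
    using x1 unfolding MS_def by blast
  obtain g2 h2 N2 where gh2: "\<forall>v\<in>verts Q. inverse_mats (?d v) (g2 v) (h2 v)" and tr2: "trinv qs N2"
    and x2e: "x2 = gl_act Q ?d g2 h2 (repc Q ?d (mcoef Cs Bs N2) ?E)"
    using x2 unfolding MS_def by blast
  define GG where "GG t v i l = (1 - t) * g1 v i l + t * g2 v i l" for t :: 'k and v i l
  define NN where "NN t j c c' = (1 - t) * N1 j c c' + t * N2 j c c'" for t :: 'k and j c c'
  define D where "D t v = det (Mt (?d v) (GG t v))" for t v
  define HH where "HH t v l j = adj_mat (Mt (?d v) (GG t v)) $$ (l,j) / D t v" for t v l j
  define Phi where "Phi t = gl_act Q ?d (GG t) (HH t) (repc Q ?d (mcoef Cs Bs (NN t)) ?E)" for t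
  define NP where "NP t = (\<Prod>j<length qs. \<Prod>i<qs!j. NN t j i i)" for t
  define qf where "qf t = (\<Prod>v\<in>verts Q. D t v) * NP t" for t
  have GPF: "(\<lambda>t. GG t v i l) \<in> PF" for v i l unfolding GG_def by (rule PF_lin)
  have NPF: "(\<lambda>t. NN t j c c') \<in> PF" for j c c' unfolding NN_def by (rule PF_lin)
  have DPF: "(\<lambda>t. D t v) \<in> PF" for v
    unfolding D_def by (rule PF_det[where n = "?d v"]) (auto simp: GPF)
  have NPPF: "NP \<in> PF" unfolding NP_def by (intro PF_prod NPF)
  have qPF: "qf \<in> PF" unfolding qf_def by (intro PF_mult PF_prod DPF NPPF)
  then obtain qp where qp: "\<forall>t. qf t = poly qp t" unfolding PF_def by auto
  have inMS: "Phi t \<in> MS Q Cs Bs qs" if qt: "qf t \<noteq> 0" for t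
  proof -
    have Dn: "D t v \<noteq> 0" if "v \<in> verts Q" for v using qt that fV unfolding qf_def by (auto simp: prod_zero_iff)
    have NPn: "NP t \<noteq> 0" using qt unfolding qf_def by auto
    have Nn: "NN t j i i \<noteq> 0" if "j < length qs" "i < qs!j" for j i
      using NPn that unfolding NP_def by (auto simp: prod_zero_iff)
    have inv: "\<forall>v\<in>verts Q. inverse_mats (?d v) (GG t v) (HH t v)"
      unfolding HH_def D_def using Dn adj_inverse unfolding D_def by blast
    have tr: "trinv qs (NN t)"
      unfolding trinv_def using Nn tr1 tr2 unfolding trinv_def NN_def by auto
    show ?thesis unfolding Phi_def MS_def using inv tr by blast
  qed
  have G0: "GG 0 = g1" "NN 0 = N1" and G1: "GG 1 = g2" "NN 1 = N2" unfolding GG_def NN_def by auto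
  have Phi0: "Phi 0 = x1"
  proof -
    have "\<forall>v\<in>verts Q. \<forall>i<?d v. \<forall>j<?d v. HH 0 v i j = h1 v i j"
    proof (intro ballI allI impI)
      fix v i j assume v: "v \<in> verts Q" and ij: "i < ?d v" "j < ?d v"
      have "det (Mt (?d v) (g1 v)) \<noteq> 0" using gh1 v inverse_mats_det by blast
      then have "inverse_mats (?d v) (g1 v) (HH 0 v)" unfolding HH_def D_def G0 by (rule adj_inverse)
      then show "HH 0 v i j = h1 v i j" using inverse_mats_unique gh1 v ij by blast
    qed
    then show ?thesis unfolding Phi_def x1e G0 by (rule gl_act_cong_verts[OF ends])
  qed
  have Phi1: "Phi 1 = x2"
  proof -
    have "\<forall>v\<in>verts Q. \<forall>i<?d v. \<forall>j<?d v. HH 1 v i j = h2 v i j"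
    proof (intro ballI allI impI)
      fix v i j assume v: "v \<in> verts Q" and ij: "i < ?d v" "j < ?d v"
      have "det (Mt (?d v) (g2 v)) \<noteq> 0" using gh2 v inverse_mats_det by blast
      then have "inverse_mats (?d v) (g2 v) (HH 1 v)" unfolding HH_def D_def G1 by (rule adj_inverse)
      then show "HH 1 v i j = h2 v i j" using inverse_mats_unique gh2 v ij by blast
    qed
    then show ?thesis unfolding Phi_def x2e G1 by (rule gl_act_cong_verts[OF ends])
  qed
  have q0: "qf 0 \<noteq> 0"
  proof -
    have "D 0 v \<noteq> 0" if "v \<in> verts Q" for v unfolding D_def G0 using gh1 that inverse_mats_det by blast
    moreover have "NP 0 \<noteq> 0" unfolding NP_def G0
      by (intro prod_nz) (use tr1 in \<open>auto simp: trinv_def\<close>)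
    ultimately show ?thesis unfolding qf_def using fV by (auto intro: prod_nz)
  qed
  have q1: "qf 1 \<noteq> 0"
  proof -
    have "D 1 v \<noteq> 0" if "v \<in> verts Q" for v unfolding D_def G1 using gh2 that inverse_mats_det by blast
    moreover have "NP 1 \<noteq> 0" unfolding NP_def G1
      by (intro prod_nz) (use tr2 in \<open>auto simp: trinv_def\<close>)
    ultimately show ?thesis unfolding qf_def using fV by (auto intro: prod_nz)
  qed
  have invD: "(\<lambda>t. inverse (D t v)) \<in> RQ qp" if v: "v \<in> verts Q" for v
  proof (rule RQ_inv)
    show "poly qp t = D t v * ((\<Prod>v'\<in>verts Q - {v}. D t v') * NP t)" for t
      using qp fV v unfolding qf_def by (simp add: prod.remove mult.assoc)
    show "(\<lambda>t. D t v) \<in> PF" by (rule DPF)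
    show "(\<lambda>t. (\<Prod>v'\<in>verts Q - {v}. D t v') * NP t) \<in> PF" by (intro PF_mult PF_prod DPF NPPF)
  qed
  have coordR: "(\<lambda>t. Phi t a i j) \<in> RQ qp" for a i j
  proof (cases "a \<in> arrs Q \<and> i < ?d (tgt Q a) \<and> j < ?d (src Q a)")
    case False
    then have "(\<lambda>t. Phi t a i j) = (\<lambda>t. 0)" unfolding Phi_def gl_act_def by auto
    then show ?thesis by (simp add: PF_RQ)
  next
    case True
    let ?t = "tgt Q a" and ?s = "src Q a"
    have vs: "?s \<in> verts Q" using ends True by auto
    have e: "(\<lambda>t. Phi t a i j) = (\<lambda>t. \<Sum>l<?d ?t. \<Sum>l'<?d ?s. GG t ?t i l * repc Q ?d (mcoef Cs Bs (NN t)) ?E a l l' *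
        (adj_mat (Mt (?d ?s) (GG t ?s)) $$ (l',j) * inverse (D t ?s)))"
      unfolding Phi_def gl_act_def HH_def using True by (simp add: divide_inverse)
    have "(\<lambda>t. \<Sum>l<?d ?t. \<Sum>l'<?d ?s. GG t ?t i l * repc Q ?d (mcoef Cs Bs (NN t)) ?E a l l' *
        (adj_mat (Mt (?d ?s) (GG t ?s)) $$ (l',j) * inverse (D t ?s))) \<in> RQ qp"
    proof (intro RQ_sum RQ_mult)
      fix l l' assume l': "l' \<in> {..<?d ?s}"
      show "(\<lambda>t. GG t ?t i l) \<in> RQ qp" by (rule PF_RQ[OF GPF])
      show "(\<lambda>t. repc Q ?d (mcoef Cs Bs (NN t)) ?E a l l') \<in> RQ qp"
        unfolding repc_def by (intro PF_RQ PF_if mcoef_PF NPF PF_const)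
      show "(\<lambda>t. adj_mat (Mt (?d ?s) (GG t ?s)) $$ (l',j)) \<in> RQ qp"
        by (rule PF_RQ, rule cofactor_PF) (use l' True GPF in auto)
      show "(\<lambda>t. inverse (D t ?s)) \<in> RQ qp" by (rule invD[OF vs])
    qed
    then show ?thesis unfolding e .
  qed
  have polyR: "f \<in> polyfun \<Longrightarrow> (\<lambda>t. f (Phi t)) \<in> RQ qp" for f :: "('a,'k) point \<Rightarrow> 'k"
  proof (induction rule: polyfun.induct)
    case (pconst c) then show ?case by (rule PF_RQ[OF PF_const])
  next
    case (pcoord a i j) then show ?case by (rule coordR)
  next
    case (padd f g) show ?case by (rule RQ_add[OF padd.IH(1) padd.IH(2)])
  next
    case (pmult f g) show ?case by (rule RQ_mult[OF pmult.IH(1) pmult.IH(2)])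
  qed
  obtain p1 m1 where p1: "\<forall>t. poly qp t \<noteq> 0 \<longrightarrow> f1 (Phi t) * poly qp t ^ m1 = poly p1 t"
    using polyR[OF f1] unfolding RQ_def by blast
  obtain p2 m2 where p2: "\<forall>t. poly qp t \<noteq> 0 \<longrightarrow> f2 (Phi t) * poly qp t ^ m2 = poly p2 t"
    using polyR[OF f2] unfolding RQ_def by blast
  have qp0: "poly qp 0 \<noteq> 0" "poly qp 1 \<noteq> 0" using q0 q1 qp by auto
  have "poly p1 0 \<noteq> 0" using p1 qp0 n1 Phi0 by (metis mult_eq_0_iff power_not_zero)
  then have p1n: "p1 \<noteq> 0" by auto
  have "poly p2 1 \<noteq> 0" using p2 qp0 n2 Phi1 by (metis mult_eq_0_iff power_not_zero)
  then have p2n: "p2 \<noteq> 0" by auto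
  have qpn: "qp \<noteq> 0" using qp0 by auto
  have "p1 * p2 * qp \<noteq> 0" using p1n p2n qpn by simp
  then have "finite {t. poly (p1 * p2 * qp) t = 0}" by (rule poly_roots_finite)
  then obtain t where t: "poly (p1 * p2 * qp) t \<noteq> 0"
    using inf by (metis (mono_tags, lifting) UNIV_I mem_Collect_eq subsetI finite_subset)
  then have tq: "poly qp t \<noteq> 0" and t1: "poly p1 t \<noteq> 0" and t2: "poly p2 t \<noteq> 0" by auto
  have "f1 (Phi t) \<noteq> 0" using p1 tq t1 by (metis mult_zero_left)
  moreover have "f2 (Phi t) \<noteq> 0" using p2 tq t2 by (metis mult_zero_left)
  moreover have "Phi t \<in> MS Q Cs Bs qs" using inMS tq qp by simp
  ultimately show ?thesis by blast
qed


lemma inverse_mats_id: "inverse_mats n (\<lambda>i j. if i = j then (1::'k::field) else 0) (\<lambda>i j. if i = j then 1 else 0)"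
  unfolding inverse_mats_def
proof (intro allI impI conjI)
  fix i j assume "i < n" "j < n"
  then show "(\<Sum>l<n. (if i = l then (1::'k) else 0) * (if l = j then 1 else 0)) = (if i = j then 1 else 0)"
    using sum_delta_l[of "{..<n}" i "\<lambda>l. if l = j then (1::'k) else 0"] by simp
  then show "(\<Sum>l<n. (if i = l then (1::'k) else 0) * (if l = j then 1 else 0)) = (if i = j then 1 else 0)" .
qed

theorem mainTheorem2:
  fixes Q :: "('v,'a) bquiver"
    and Cs :: "('v,'a) walk list"
    and Bs :: "('v,'a) walk list"
    and qs :: "nat list"
  assumes "alg_closed TYPE('k::field)"
    and "gentle Q" and "fin_dim Q"
    and "\<forall>C\<in>set Cs. is_string Q C"
    and "length qs = length Bs"
    and "\<forall>j<length Bs. is_band Q (Bs ! j) \<and> minimal_band (Bs ! j) \<and> qs ! j \<ge> 1"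
    and "\<forall>i<length Bs. \<forall>j<length Bs. i \<noteq> j \<longrightarrow> \<not> band_equiv Q (Bs ! i) (Bs ! j)"
  shows "(famO Q Cs Bs qs :: ('a,'k) point set) \<subseteq> modvar Q (dimD Q Cs Bs qs) \<and>
         zirreducible Q (dimD Q Cs Bs qs) (famO Q Cs Bs qs :: ('a,'k) point set)"
proof -
  note G = assms(2) and lq = assms(5)
  let ?d = "dimD Q Cs Bs qs"
  let ?E = "e0 Q Cs Bs qs"
  have eq: "(famO Q Cs Bs qs :: ('a,'k) point set) = MS Q Cs Bs qs"
    using famO_sub_MS[OF G lq] MS_sub_famO[OF G lq] by blast
  have bands: "\<forall>j<length Bs. is_band Q (Bs ! j)" using assms(6) by blast
  have e0b: "\<forall>v\<in>verts Q. bij_betw (?E v) {..<?d v} (MB Q Cs Bs qs v)" by (simp add: e0_bij)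
  have sub: "(MS Q Cs Bs qs :: ('a,'k) point set) \<subseteq> modvar Q ?d"
  proof
    fix x :: "('a,'k) point" assume "x \<in> MS Q Cs Bs qs"
    then obtain g h N where gh: "\<forall>v\<in>verts Q. inverse_mats (?d v) (g v) (h v)"
      and x: "x = gl_act Q ?d g h (repc Q ?d (mcoef Cs Bs N) ?E)"
      unfolding MS_def by blast
    have "repc Q ?d (mcoef Cs Bs N) ?E \<in> modvar Q ?d" by (rule repc_modvar[OF G assms(4) bands e0b])
    then show "x \<in> modvar Q ?d" unfolding x by (rule gl_act_modvar[OF G _ gh])
  qed
  have inf: "infinite (UNIV :: 'k set)" by (rule alg_closed_infinite[OF assms(1)])
  have ne: "(MS Q Cs Bs qs :: ('a,'k) point set) \<noteq> {}"
  proof -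
    let ?I = "\<lambda>v i j. if i = j then (1::'k) else 0"
    let ?N = "\<lambda>j i i'. if i = i' then (1::'k) else 0"
    have "trinv qs ?N" unfolding trinv_def by auto
    moreover have "\<forall>v\<in>verts Q. inverse_mats (?d v) (?I v) (?I v)" using inverse_mats_id by blast
    ultimately have "gl_act Q ?d ?I ?I (repc Q ?d (mcoef Cs Bs ?N) ?E) \<in> MS Q Cs Bs qs"
      unfolding MS_def by blast
    then show ?thesis by blast
  qed
  have irr: "\<forall>Z1 Z2. zclosed Q ?d Z1 \<and> zclosed Q ?d Z2 \<and> (MS Q Cs Bs qs :: ('a,'k) point set) \<subseteq> Z1 \<union> Z2 \<longrightarrow>
      MS Q Cs Bs qs \<subseteq> Z1 \<or> MS Q Cs Bs qs \<subseteq> Z2"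
  proof (intro allI impI)
    fix Z1 Z2 :: "('a,'k) point set"
    assume H: "zclosed Q ?d Z1 \<and> zclosed Q ?d Z2 \<and> MS Q Cs Bs qs \<subseteq> Z1 \<union> Z2"
    show "MS Q Cs Bs qs \<subseteq> Z1 \<or> MS Q Cs Bs qs \<subseteq> Z2"
    proof (rule ccontr)
      assume "\<not> (MS Q Cs Bs qs \<subseteq> Z1 \<or> MS Q Cs Bs qs \<subseteq> Z2)"
      then obtain x1 x2 where x1: "x1 \<in> MS Q Cs Bs qs" "x1 \<notin> Z1" and x2: "x2 \<in> MS Q Cs Bs qs" "x2 \<notin> Z2" by blast
      obtain S1 where S1: "S1 \<subseteq> polyfun" "Z1 = {x \<in> aff Q ?d. \<forall>f\<in>S1. f x = 0}" using H unfolding zclosed_def by blast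
      obtain S2 where S2: "S2 \<subseteq> polyfun" "Z2 = {x \<in> aff Q ?d. \<forall>f\<in>S2. f x = 0}" using H unfolding zclosed_def by blast
      have a1: "x1 \<in> aff Q ?d" using sub x1(1) unfolding modvar_def by blast
      have a2: "x2 \<in> aff Q ?d" using sub x2(1) unfolding modvar_def by blast
      obtain f1 where f1: "f1 \<in> S1" "f1 x1 \<noteq> 0" using x1(2) a1 S1(2) by blast
      obtain f2 where f2: "f2 \<in> S2" "f2 x2 \<noteq> 0" using x2(2) a2 S2(2) by blast
      have "\<exists>x\<in>MS Q Cs Bs qs. f1 x \<noteq> 0 \<and> f2 x \<noteq> 0"
      proof -
        have pf1: "f1 \<in> polyfun" using f1(1) S1(1) by blast
        have pf2: "f2 \<in> polyfun" using f2(1) S2(1) by blast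
        note L = line_lemma[OF G]
        note L2 = L[OF inf]
        note L3 = L2[OF x1(1) x2(1) pf1 pf2 f1(2) f2(2)]
        show ?thesis by (rule L3)
      qed
      then obtain x where x: "x \<in> MS Q Cs Bs qs" "f1 x \<noteq> 0" "f2 x \<noteq> 0" by blast
      then have "x \<in> Z1 \<union> Z2" using H by blast
      then show False
      proof
        assume "x \<in> Z1" then have "f1 x = 0" using f1(1) S1(2) by blast
        then show False using x(2) by simp
      next
        assume "x \<in> Z2" then have "f2 x = 0" using f2(1) S2(2) by blast
        then show False using x(3) by simp
      qed
    qed
  qed
  show ?thesis unfolding eq zirreducible_def using sub ne irr by blast
qed

end
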